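(* Let $p\ge3$ be a prime and let $\mathbf{Q}_p(\sqrt d)$ be an unramified quadratic extension of $\mathbf{Q}_p$. Suppose $\lambda\in U^0(\sqrt d)$ has order $l$ modulo $p$, and let $k=\nu_p(\lambda^l-1)$. Then the closed subgroup of $U^0(\sqrt d)$ generated by $\lambda$ is $$\overline{\{\lambda^n:n\in\mathbf{N}\}}=\bigsqcup_{i=0}^{l-1}\left(\lambda^i+p^k\mathbf{Z}_p[\sqrt d]\right)\cap U^0(\sqrt d).$$ In particular, if $l=2(p+1)$ and $k=1$, then $\overline{\{\lambda^n:n\in\mathbf{N}\}}=U^0(\sqrt d)$.
   Context: Here $d\in\mathbf{Z}_p^*$ is a non-square, and $\mathbf{Z}_p[\sqrt d]$ is the ring of integers of $\mathbf{Q}_p(\sqrt d)$. The norm is $N(x+y\sqrt d)=x^2-y^2d$, and $U^0(\sqrt d)=\{z\in\mathbf{Z}_p[\sqrt d]^*: N(z)=\pm1\}$. The order of a unit $\lambda$ modulo $p$ is the least $l\ge1$ with $\lambda^l-1\in p\mathbf{Z}_p[\sqrt d]$. $\nu_p$ is the valuation on $\mathbf{Q}_p(\sqrt d)$ with $\nu_p(p)=1$. $\bigsqcup$ denotes disjoint union. *)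

theory Defs
  imports "HOL-Computational_Algebra.Primes" "HOL-Library.Extended_Nat"
begin

text \<open>p-adic integers as coherent sequences of residues: x n is the residue mod p^n.\<close>
type_synonym zp = "nat \<Rightarrow> int"
text \<open>Elements x + y sqrt d of Z_p[sqrt d] as pairs (x, y).\<close>
type_synonym zpd = "zp \<times> zp"

definition Zp :: "int \<Rightarrow> zp set" where
  "Zp p = {x. \<forall>n. 0 \<le> x n \<and> x n < p ^ n \<and> x (Suc n) mod p ^ n = x n}"

definition zp_add :: "int \<Rightarrow> zp \<Rightarrow> zp \<Rightarrow> zp" where
  "zp_add p x y = (\<lambda>n. (x n + y n) mod p ^ n)"
definition zp_mul :: "int \<Rightarrow> zp \<Rightarrow> zp \<Rightarrow> zp" where
  "zp_mul p x y = (\<lambda>n. (x n * y n) mod p ^ n)"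
definition zp_neg :: "int \<Rightarrow> zp \<Rightarrow> zp" where
  "zp_neg p x = (\<lambda>n. (- x n) mod p ^ n)"
definition zp_of_int :: "int \<Rightarrow> int \<Rightarrow> zp" where
  "zp_of_int p a = (\<lambda>n. a mod p ^ n)"

definition zp_unit :: "int \<Rightarrow> zp \<Rightarrow> bool" where
  "zp_unit p x \<longleftrightarrow> (\<exists>y\<in>Zp p. zp_mul p x y = zp_of_int p 1)"
definition zp_square :: "int \<Rightarrow> zp \<Rightarrow> bool" where
  "zp_square p x \<longleftrightarrow> (\<exists>y\<in>Zp p. zp_mul p y y = x)"

definition Zpd :: "int \<Rightarrow> zpd set" where
  "Zpd p = Zp p \<times> Zp p"

definition zpd_add :: "int \<Rightarrow> zpd \<Rightarrow> zpd \<Rightarrow> zpd" where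
  "zpd_add p z w = (zp_add p (fst z) (fst w), zp_add p (snd z) (snd w))"
definition zpd_sub :: "int \<Rightarrow> zpd \<Rightarrow> zpd \<Rightarrow> zpd" where
  "zpd_sub p z w = (zp_add p (fst z) (zp_neg p (fst w)), zp_add p (snd z) (zp_neg p (snd w)))"
definition zpd_mul :: "int \<Rightarrow> zp \<Rightarrow> zpd \<Rightarrow> zpd \<Rightarrow> zpd" where
  "zpd_mul p d z w =
     (zp_add p (zp_mul p (fst z) (fst w)) (zp_mul p d (zp_mul p (snd z) (snd w))),
      zp_add p (zp_mul p (fst z) (snd w)) (zp_mul p (snd z) (fst w)))"
definition zpd_one :: "int \<Rightarrow> zpd" where
  "zpd_one p = (zp_of_int p 1, zp_of_int p 0)"

primrec zpd_pow :: "int \<Rightarrow> zp \<Rightarrow> zpd \<Rightarrow> nat \<Rightarrow> zpd" where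
  "zpd_pow p d z 0 = zpd_one p"
| "zpd_pow p d z (Suc n) = zpd_mul p d z (zpd_pow p d z n)"

definition zpd_norm :: "int \<Rightarrow> zp \<Rightarrow> zpd \<Rightarrow> zp" where
  "zpd_norm p d z = zp_add p (zp_mul p (fst z) (fst z))
                      (zp_neg p (zp_mul p (zp_mul p (snd z) (snd z)) d))"

definition U0 :: "int \<Rightarrow> zp \<Rightarrow> zpd set" where
  "U0 p d = {z \<in> Zpd p. (\<exists>w\<in>Zpd p. zpd_mul p d z w = zpd_one p) \<and>
              (zpd_norm p d z = zp_of_int p 1 \<or> zpd_norm p d z = zp_neg p (zp_of_int p 1))}"

text \<open>The ideal p^k Z_p[sqrt d], k an extended natural (p^\<infinity> Z_p[sqrt d] = {0}).\<close>
definition pk_ideal :: "int \<Rightarrow> enat \<Rightarrow> zpd set" where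
  "pk_ideal p k = {w \<in> Zpd p. \<forall>j. enat j \<le> k \<longrightarrow> fst w j = 0 \<and> snd w j = 0}"

definition nu :: "int \<Rightarrow> zpd \<Rightarrow> enat" where
  "nu p z = Sup {enat j | j. z \<in> pk_ideal p (enat j)}"

definition mod_order :: "int \<Rightarrow> zp \<Rightarrow> zpd \<Rightarrow> nat" where
  "mod_order p d lam =
     (LEAST l. 1 \<le> l \<and> zpd_sub p (zpd_pow p d lam l) (zpd_one p) \<in> pk_ideal p (enat 1))"

definition zpd_closure :: "int \<Rightarrow> zpd set \<Rightarrow> zpd set" where
  "zpd_closure p S = {z \<in> Zpd p. \<forall>m. \<exists>s\<in>S. fst s m = fst z m \<and> snd s m = snd z m}"

definition zpd_coset :: "int \<Rightarrow> zpd \<Rightarrow> enat \<Rightarrow> zpd set" where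
  "zpd_coset p a k = (\<lambda>w. zpd_add p a w) ` pk_ideal p k"

end

theory Submission
  imports Defs "HOL-Number_Theory.Cong"
begin
type_synonym ip = "int \<times> int"

definition pm :: "int \<Rightarrow> ip \<Rightarrow> ip \<Rightarrow> ip" where
  "pm D z w = (fst z * fst w + D * (snd z * snd w), fst z * snd w + snd z * fst w)"

primrec pp :: "int \<Rightarrow> ip \<Rightarrow> nat \<Rightarrow> ip" where
  "pp D z 0 = (1, 0)"
| "pp D z (Suc n) = pm D z (pp D z n)"

definition nrm :: "int \<Rightarrow> ip \<Rightarrow> int" where
  "nrm D z = fst z * fst z - D * (snd z * snd z)"

definition pc :: "int \<Rightarrow> ip \<Rightarrow> ip \<Rightarrow> bool" where
  "pc q z w \<longleftrightarrow> [fst z = fst w] (mod q) \<and> [snd z = snd w] (mod q)"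

definition pmd :: "int \<Rightarrow> ip \<Rightarrow> ip" where
  "pmd q z = (fst z mod q, snd z mod q)"

lemma pc_pmd: "pc q z w \<longleftrightarrow> pmd q z = pmd q w"
  by (simp add: pc_def pmd_def cong_def prod_eq_iff)

lemma pc_refl[simp]: "pc q z z" by (simp add: pc_def)
lemma pc_sym: "pc q z w \<Longrightarrow> pc q w z" by (auto simp: pc_def cong_sym)
lemma pc_trans: "pc q z w \<Longrightarrow> pc q w v \<Longrightarrow> pc q z v" by (auto simp: pc_def intro: cong_trans)

lemma pm_comm: "pm D z w = pm D w z"
  by (simp add: pm_def algebra_simps)
lemma pm_assoc: "pm D (pm D z w) v = pm D z (pm D w v)"
  by (simp add: pm_def algebra_simps)
lemma pm_one[simp]: "pm D (1,0) z = z" "pm D z (1,0) = z"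
  by (simp_all add: pm_def)

lemma pp_add: "pp D z (m + n) = pm D (pp D z m) (pp D z n)"
  by (induction m) (simp_all add: pm_assoc)
lemma pp_mult: "pp D z (m * n) = pp D (pp D z m) n"
  by (induction n) (simp_all add: pp_add pm_comm)
lemma pp_pm: "pp D (pm D z w) n = pm D (pp D z n) (pp D w n)"
proof (induction n)
  case (Suc n)
  have "pm D (pm D z w) (pm D (pp D z n) (pp D w n)) = pm D (pm D z (pp D z n)) (pm D w (pp D w n))"
    by (metis pm_assoc pm_comm)
  then show ?case using Suc by simp
qed simp

lemma nrm_pm: "nrm D (pm D z w) = nrm D z * nrm D w"
  by (simp add: nrm_def pm_def algebra_simps)
lemma nrm_pp: "nrm D (pp D z n) = nrm D z ^ n"
  by (induction n) (simp_all add: nrm_pm, simp add: nrm_def)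

lemma pc_pm: "pc q z z' \<Longrightarrow> pc q w w' \<Longrightarrow> pc q (pm D z w) (pm D z' w')"
  unfolding pc_def pm_def by (auto intro!: cong_add cong_mult)
lemma pc_pp: "pc q z z' \<Longrightarrow> pc q (pp D z n) (pp D z' n)"
  by (induction n) (simp_all add: pc_pm)
lemma pc_nrm: "pc q z z' \<Longrightarrow> [nrm D z = nrm D z'] (mod q)"
  unfolding pc_def nrm_def by (auto intro!: cong_add cong_mult cong_diff)
lemma pc_dvd: "pc q z w \<Longrightarrow> r dvd q \<Longrightarrow> pc r z w"
  unfolding pc_def using cong_dvd_modulus by blast
lemma pc_pow_le: "pc (p^m) z w \<Longrightarrow> j \<le> m \<Longrightarrow> pc (p^j) z w"
  by (erule pc_dvd) (simp add: le_imp_power_dvd)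

definition rp :: "nat \<Rightarrow> zpd \<Rightarrow> ip" where "rp m z = (fst z m, snd z m)"

lemma Zp_rng: "x \<in> Zp p \<Longrightarrow> x n mod p ^ n = x n"
  unfolding Zp_def by (simp add: mod_pos_pos_trivial)

lemma Zp_coh: assumes "x \<in> Zp p" "p > 0" "j \<le> M" shows "x j = x M mod p ^ j"
  using assms(3)
proof (induction M)
  case 0
  have "x 0 = 0" using Zp_rng[OF assms(1), of 0] by (metis mod_by_1 power_0)
  then show ?case using 0 by simp
next
  case (Suc M)
  show ?case
  proof (cases "j = Suc M")
    case True then show ?thesis using Zp_rng[OF assms(1)] by metis
  next
    case False
    then have "j \<le> M" using Suc by simp
    then have "x j = x M mod p ^ j" using Suc by simp
    also have "x M = x (Suc M) mod p ^ M" using assms(1) unfolding Zp_def by simp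
    also have "(x (Suc M) mod p ^ M) mod p ^ j = x (Suc M) mod p ^ j"
      using \<open>j \<le> M\<close> by (simp add: le_imp_power_dvd mod_mod_cancel)
    finally show ?thesis .
  qed
qed

lemma Zp_modI: assumes "\<And>n. [g (Suc n) = g n] (mod p ^ n)" "p > 0"
  shows "(\<lambda>n. g n mod p ^ n) \<in> Zp p"
  unfolding Zp_def
proof (safe)
  fix n
  show "0 \<le> g n mod p ^ n" "g n mod p ^ n < p ^ n" using assms(2) by simp_all
  have "g (Suc n) mod p ^ Suc n mod p ^ n = g (Suc n) mod p ^ n"
    by (simp add: mod_mod_cancel)
  also have "\<dots> = g n mod p ^ n" using assms(1) by (simp add: cong_def)
  finally show "g (Suc n) mod p ^ Suc n mod p ^ n = g n mod p ^ n" .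
qed

lemma Zp_cong: "x \<in> Zp p \<Longrightarrow> [x (Suc n) = x n] (mod p ^ n)"
  unfolding Zp_def cong_def by (simp add: Zp_rng)

lemma Zp_add: "x \<in> Zp p \<Longrightarrow> y \<in> Zp p \<Longrightarrow> p > 0 \<Longrightarrow> zp_add p x y \<in> Zp p"
  unfolding zp_add_def by (rule Zp_modI) (auto intro: cong_add Zp_cong)
lemma Zp_mul: "x \<in> Zp p \<Longrightarrow> y \<in> Zp p \<Longrightarrow> p > 0 \<Longrightarrow> zp_mul p x y \<in> Zp p"
  unfolding zp_mul_def by (rule Zp_modI) (auto intro: cong_mult Zp_cong)
lemma Zp_neg: "x \<in> Zp p \<Longrightarrow> p > 0 \<Longrightarrow> zp_neg p x \<in> Zp p"
  unfolding zp_neg_def by (rule Zp_modI) (auto intro: cong_minus_minus_iff[THEN iffD2] Zp_cong)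
lemma Zp_of_int: "p > 0 \<Longrightarrow> zp_of_int p a \<in> Zp p"
  unfolding zp_of_int_def by (rule Zp_modI) auto

lemma Zpd_mul: "z \<in> Zpd p \<Longrightarrow> w \<in> Zpd p \<Longrightarrow> d \<in> Zp p \<Longrightarrow> p > 0 \<Longrightarrow> zpd_mul p d z w \<in> Zpd p"
  unfolding Zpd_def zpd_mul_def by (auto intro!: Zp_add Zp_mul)
lemma Zpd_add: "z \<in> Zpd p \<Longrightarrow> w \<in> Zpd p \<Longrightarrow> p > 0 \<Longrightarrow> zpd_add p z w \<in> Zpd p"
  unfolding Zpd_def zpd_add_def by (auto intro!: Zp_add)
lemma Zpd_sub: "z \<in> Zpd p \<Longrightarrow> w \<in> Zpd p \<Longrightarrow> p > 0 \<Longrightarrow> zpd_sub p z w \<in> Zpd p"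
  unfolding Zpd_def zpd_sub_def by (auto intro!: Zp_add Zp_neg)
lemma Zpd_one: "p > 0 \<Longrightarrow> zpd_one p \<in> Zpd p"
  unfolding Zpd_def zpd_one_def by (auto intro!: Zp_of_int)
lemma Zpd_pow: "z \<in> Zpd p \<Longrightarrow> d \<in> Zp p \<Longrightarrow> p > 0 \<Longrightarrow> zpd_pow p d z n \<in> Zpd p"
  by (induction n) (auto intro!: Zpd_mul Zpd_one)

lemma rp_Zpd: "z \<in> Zpd p \<Longrightarrow> pmd (p ^ M) (rp M z) = rp M z"
  unfolding Zpd_def rp_def pmd_def by (auto simp: Zp_rng)

lemma rp_coh: "z \<in> Zpd p \<Longrightarrow> p > 0 \<Longrightarrow> j \<le> M \<Longrightarrow> rp j z = pmd (p ^ j) (rp M z)"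
  unfolding Zpd_def rp_def pmd_def using Zp_coh by (auto)

lemma rp_eq_le: "z \<in> Zpd p \<Longrightarrow> w \<in> Zpd p \<Longrightarrow> p > 0 \<Longrightarrow> j \<le> M \<Longrightarrow> rp M z = rp M w \<Longrightarrow> rp j z = rp j w"
  using rp_coh by metis

lemma Zpd_eqI: "z \<in> Zpd p \<Longrightarrow> w \<in> Zpd p \<Longrightarrow> (\<And>m. rp m z = rp m w) \<Longrightarrow> z = w"
  unfolding rp_def by (auto simp: prod_eq_iff fun_eq_iff)

lemma pmd_idem[simp]: "pmd q (pmd q w) = pmd q w" by (simp add: pmd_def)
lemma pc_pmd_self: "pc q (pmd q w) w" by (simp add: pc_pmd)
lemma pmd_pm: "pmd q (pm D z (pmd q w)) = pmd q (pm D z w)"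
  "pmd q (pm D (pmd q z) w) = pmd q (pm D z w)"
  by (simp_all add: pc_pmd[symmetric] pc_pm pc_pmd_self)

lemma rp_mul: "rp M (zpd_mul p d z w) = pmd (p ^ M) (pm (d M) (rp M z) (rp M w))"
  unfolding rp_def zpd_mul_def pmd_def pm_def zp_add_def zp_mul_def
  by (simp add: mod_simps algebra_simps)

lemma rp_one: "rp M (zpd_one p) = pmd (p ^ M) (1, 0)"
  unfolding rp_def zpd_one_def pmd_def zp_of_int_def by simp

lemma rp_pow: "rp M (zpd_pow p d z n) = pmd (p ^ M) (pp (d M) (rp M z) n)"
  by (induction n) (simp_all add: rp_one rp_mul pmd_pm)

lemma rp_add: "rp M (zpd_add p z w) = pmd (p ^ M) (fst (rp M z) + fst (rp M w), snd (rp M z) + snd (rp M w))"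
  unfolding rp_def zpd_add_def pmd_def zp_add_def by simp

lemma rp_sub: "rp M (zpd_sub p z w) = pmd (p ^ M) (fst (rp M z) - fst (rp M w), snd (rp M z) - snd (rp M w))"
  unfolding rp_def zpd_sub_def pmd_def zp_add_def zp_neg_def by (simp add: mod_simps)

lemma norm_rp: "zpd_norm p d z M = nrm (d M) (rp M z) mod p ^ M"
  unfolding zpd_norm_def rp_def nrm_def zp_add_def zp_mul_def zp_neg_def
  by (simp add: mod_simps algebra_simps)

lemma pmd_diff0: "pmd q (fst z - fst w, snd z - snd w) = (0, 0) \<longleftrightarrow> pmd q z = pmd q w"
  unfolding pmd_def by (simp add: mod_eq_dvd_iff dvd_eq_mod_eq_0[symmetric])

lemma rp_pk: "rp j w = (0,0) \<longleftrightarrow> fst w j = 0 \<and> snd w j = 0"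
  by (simp add: rp_def)

lemma sub_ideal:
  assumes "a \<in> Zpd p" "b \<in> Zpd p" "p > 0"
  shows "zpd_sub p a b \<in> pk_ideal p k \<longleftrightarrow> (\<forall>j. enat j \<le> k \<longrightarrow> rp j a = rp j b)"
proof -
  have "\<And>j. rp j (zpd_sub p a b) = (0,0) \<longleftrightarrow> rp j a = rp j b"
    unfolding rp_sub using rp_Zpd[OF assms(1)] rp_Zpd[OF assms(2)]
    by (metis pmd_diff0 prod.collapse)
  then show ?thesis unfolding pk_ideal_def using Zpd_sub[OF assms] by (auto simp: rp_pk)
qed

lemma coset_iff:
  assumes "a \<in> Zpd p" "p > 0"
  shows "z \<in> zpd_coset p a k \<longleftrightarrow> z \<in> Zpd p \<and> (\<forall>j. enat j \<le> k \<longrightarrow> rp j z = rp j a)"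
proof
  assume "z \<in> zpd_coset p a k"
  then obtain w where w: "w \<in> pk_ideal p k" "z = zpd_add p a w" unfolding zpd_coset_def by auto
  have wZ: "w \<in> Zpd p" using w(1) unfolding pk_ideal_def by auto
  have "rp j z = rp j a" if "enat j \<le> k" for j
  proof -
    have "rp j w = (0,0)" using w(1) that unfolding pk_ideal_def rp_pk by auto
    then have "rp j z = pmd (p ^ j) (rp j a)" unfolding w(2) rp_add by (simp add: pmd_def)
    then show ?thesis using rp_Zpd[OF assms(1)] by simp
  qed
  then show "z \<in> Zpd p \<and> (\<forall>j. enat j \<le> k \<longrightarrow> rp j z = rp j a)"
    using w(2) Zpd_add[OF assms(1) wZ assms(2)] by auto
next
  assume H: "z \<in> Zpd p \<and> (\<forall>j. enat j \<le> k \<longrightarrow> rp j z = rp j a)"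
  then have zZ: "z \<in> Zpd p" by simp
  have I: "zpd_sub p z a \<in> pk_ideal p k" using sub_ideal[OF zZ assms(1,2)] H by blast
  have "zpd_add p a (zpd_sub p z a) = z"
  proof (rule Zpd_eqI[of _ p])
    show "zpd_add p a (zpd_sub p z a) \<in> Zpd p"
      using zZ assms by (intro Zpd_add Zpd_sub) auto
    show "z \<in> Zpd p" using zZ .
    fix m
    have "rp m (zpd_add p a (zpd_sub p z a)) = pmd (p ^ m) (rp m z)"
      unfolding rp_add rp_sub pmd_def by (simp add: mod_add_right_eq)
    then show "rp m (zpd_add p a (zpd_sub p z a)) = rp m z"
      using rp_Zpd[OF zZ] by simp
  qed
  then show "z \<in> zpd_coset p a k" unfolding zpd_coset_def using I by (metis image_eqI)
qed

lemma sign_eq: "(e1 = 1 \<or> e1 = -1) \<Longrightarrow> (e2 = 1 \<or> e2 = (-1::int)) \<Longrightarrow> [e1 = e2] (mod p) \<Longrightarrow> p \<ge> 3 \<Longrightarrow> e1 = e2"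
proof -
  have "\<not> p dvd 2" if "p \<ge> 3" using zdvd_imp_le[of p 2] that by auto
  moreover have "\<not> p dvd -2" if "p \<ge> 3" using zdvd_imp_le[of p 2] that by auto
  ultimately show "(e1 = 1 \<or> e1 = -1) \<Longrightarrow> (e2 = 1 \<or> e2 = (-1::int)) \<Longrightarrow> [e1 = e2] (mod p) \<Longrightarrow> p \<ge> 3 \<Longrightarrow> e1 = e2"
    by (auto simp: cong_iff_dvd_diff)
qed

lemma pc_nrm2: "[D = D'] (mod q) \<Longrightarrow> pc q z z' \<Longrightarrow> [nrm D z = nrm D' z'] (mod q)"
  unfolding pc_def nrm_def by (auto intro!: cong_add cong_mult cong_diff)

lemma nrm_coh:
  assumes "z \<in> Zpd p" "d \<in> Zp p" "p > 0" "j \<le> M"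
  shows "[nrm (d j) (rp j z) = nrm (d M) (rp M z)] (mod p ^ j)"
proof (rule pc_nrm2)
  show "[d j = d M] (mod p ^ j)" using Zp_coh[OF assms(2,3,4)] by (simp add: cong_def)
  show "pc (p ^ j) (rp j z) (rp M z)" using rp_coh[OF assms(1,3,4)] pc_pmd by (simp add: pc_pmd)
qed

lemma U0_iff:
  assumes "p > 0" "d \<in> Zp p"
  shows "z \<in> U0 p d \<longleftrightarrow> z \<in> Zpd p \<and> (\<exists>e. (e = 1 \<or> e = -1) \<and> (\<forall>M. [nrm (d M) (rp M z) = e] (mod p ^ M)))"
proof -
  have n1: "zpd_norm p d z = zp_of_int p 1 \<longleftrightarrow> (\<forall>M. [nrm (d M) (rp M z) = 1] (mod p ^ M))"
    by (simp add: fun_eq_iff norm_rp zp_of_int_def cong_def)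
  have n2: "zpd_norm p d z = zp_neg p (zp_of_int p 1) \<longleftrightarrow> (\<forall>M. [nrm (d M) (rp M z) = -1] (mod p ^ M))"
    by (simp add: fun_eq_iff norm_rp zp_of_int_def zp_neg_def cong_def mod_simps)
  have inv: "\<exists>w\<in>Zpd p. zpd_mul p d z w = zpd_one p"
    if zZ: "z \<in> Zpd p" and e: "e = 1 \<or> e = -1" and ne: "\<forall>M. [nrm (d M) (rp M z) = e] (mod p ^ M)" for e
  proof -
    define w where "w = ((\<lambda>n. (e * fst z n) mod p ^ n), (\<lambda>n. (- e * snd z n) mod p ^ n))"
    have z1: "fst z \<in> Zp p" "snd z \<in> Zp p" using zZ by (auto simp: Zpd_def)
    have "(\<lambda>n. (e * fst z n) mod p ^ n) \<in> Zp p"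
      by (rule Zp_modI[OF _ assms(1)]) (rule cong_mult[OF cong_refl Zp_cong[OF z1(1)]])
    moreover have "(\<lambda>n. (- e * snd z n) mod p ^ n) \<in> Zp p"
      by (rule Zp_modI[OF _ assms(1)]) (rule cong_mult[OF cong_refl Zp_cong[OF z1(2)]])
    ultimately have wZ: "w \<in> Zpd p" unfolding w_def Zpd_def by simp
    have "zpd_mul p d z w = zpd_one p"
    proof (rule Zpd_eqI[of _ p])
      show "zpd_mul p d z w \<in> Zpd p" using Zpd_mul[OF zZ wZ assms(2,1)] .
      show "zpd_one p \<in> Zpd p" using Zpd_one[OF assms(1)] .
      fix m
      have "rp m w = pmd (p ^ m) (e * fst (rp m z), - e * snd (rp m z))"
        unfolding w_def rp_def pmd_def by simp
      then have "rp m (zpd_mul p d z w) = pmd (p ^ m) (pm (d m) (rp m z) (e * fst (rp m z), - e * snd (rp m z)))"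
        by (simp add: rp_mul pmd_pm)
      also have "pm (d m) (rp m z) (e * fst (rp m z), - e * snd (rp m z)) = (e * nrm (d m) (rp m z), 0)"
        by (simp add: pm_def nrm_def algebra_simps)
      also have "pmd (p ^ m) (e * nrm (d m) (rp m z), 0) = pmd (p ^ m) (1, 0)"
      proof -
        have "[e * nrm (d m) (rp m z) = e * e] (mod p ^ m)" using ne by (auto intro: cong_mult)
        moreover have "e * e = 1" using e by auto
        ultimately show ?thesis by (simp add: pmd_def cong_def)
      qed
      finally show "rp m (zpd_mul p d z w) = rp m (zpd_one p)" by (simp add: rp_one)
    qed
    then show ?thesis using wZ by auto
  qed
  show ?thesis
  proof
    assume "z \<in> U0 p d"
    then have zZ: "z \<in> Zpd p" and "zpd_norm p d z = zp_of_int p 1 \<or> zpd_norm p d z = zp_neg p (zp_of_int p 1)"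
      unfolding U0_def by auto
    then have "(\<forall>M. [nrm (d M) (rp M z) = 1] (mod p ^ M)) \<or> (\<forall>M. [nrm (d M) (rp M z) = -1] (mod p ^ M))"
      using n1 n2 by blast
    then show "z \<in> Zpd p \<and> (\<exists>e. (e = 1 \<or> e = -1) \<and> (\<forall>M. [nrm (d M) (rp M z) = e] (mod p ^ M)))"
      using zZ by blast
  next
    assume R: "z \<in> Zpd p \<and> (\<exists>e. (e = 1 \<or> e = -1) \<and> (\<forall>M. [nrm (d M) (rp M z) = e] (mod p ^ M)))"
    then obtain e where e: "e = 1 \<or> e = -1" "\<forall>M. [nrm (d M) (rp M z) = e] (mod p ^ M)" by blast
    have "zpd_norm p d z = zp_of_int p 1 \<or> zpd_norm p d z = zp_neg p (zp_of_int p 1)"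
      using e n1 n2 by blast
    then show "z \<in> U0 p d" unfolding U0_def using inv[OF _ e] R by blast
  qed
qed

lemma U0_closed:
  assumes "p \<ge> 3" "d \<in> Zp p" "z \<in> Zpd p" "\<And>M. \<exists>w\<in>U0 p d. rp M w = rp M z"
  shows "z \<in> U0 p d"
proof -
  have p0: "p > 0" using assms(1) by simp
  have "\<exists>e. (e = 1 \<or> e = -1) \<and> [nrm (d M) (rp M z) = e] (mod p ^ M)" for M
  proof -
    obtain w where w: "w \<in> U0 p d" "rp M w = rp M z" using assms(4) by blast
    then show ?thesis using U0_iff[OF p0 assms(2)] by metis
  qed
  then obtain E where E: "\<And>M. (E M = 1 \<or> E M = -1) \<and> [nrm (d M) (rp M z) = E M] (mod p ^ M)" by metis
  have "[nrm (d M) (rp M z) = E 1] (mod p ^ M)" for M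
  proof (cases "M = 0")
    case True then show ?thesis by simp
  next
    case False
    have c1: "[nrm (d 1) (rp 1 z) = nrm (d M) (rp M z)] (mod p)"
      using nrm_coh[OF assms(3,2) p0, of 1 M] False by simp
    have c2: "[nrm (d M) (rp M z) = E M] (mod p)"
      using E[of M] False by (metis cong_dvd_modulus dvd_power not_gr0)
    have c3: "[nrm (d 1) (rp 1 z) = E 1] (mod p)" using E[of 1] by simp
    have "[E M = E 1] (mod p)" using c1 c2 c3 by (meson cong_sym cong_trans)
    then have "E M = E 1" using sign_eq E assms(1) by blast
    then show ?thesis using E by metis
  qed
  then show ?thesis using U0_iff[OF p0 assms(2)] assms(3) E by blast
qed

lemma Zpd_0: "w \<in> Zpd p \<Longrightarrow> fst w 0 = 0 \<and> snd w 0 = 0"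
  unfolding Zpd_def Zp_def by (cases w) (auto, smt (verit) power_0, smt (verit) power_0)

lemma nu_inf:
  assumes "nu p w = \<infinity>" "w \<in> Zpd p"
  shows "w \<in> pk_ideal p (enat j)"
proof -
  let ?A = "{j. w \<in> pk_ideal p (enat j)}"
  have dc: "i \<in> ?A" if "j \<in> ?A" "i \<le> j" for i j
    using that unfolding pk_ideal_def by auto
  have eq: "{enat j | j. w \<in> pk_ideal p (enat j)} = enat ` ?A" by auto
  have "infinite ?A"
  proof
    assume "finite ?A"
    then have "finite (enat ` ?A)" by simp
    then have "Sup (enat ` ?A) \<noteq> \<infinity>"
      by (metis Sup_enat_def enat.distinct(1) Max_in finite_imageI image_iff zero_enat_def)
    then show False using assms(1) unfolding nu_def eq by simp
  qed
  then obtain i where "i \<in> ?A" "j \<le> i" using infinite_nat_iff_unbounded_le by blast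
  then show ?thesis using dc by blast
qed

lemma nu_fin:
  assumes "nu p w = enat K" "w \<in> Zpd p"
  shows "w \<in> pk_ideal p (enat K)" "w \<notin> pk_ideal p (enat (Suc K))"
proof -
  let ?A = "{j. w \<in> pk_ideal p (enat j)}"
  have dc: "i \<in> ?A" if "j \<in> ?A" "i \<le> j" for i j
    using that unfolding pk_ideal_def by auto
  have eq: "{enat j | j. w \<in> pk_ideal p (enat j)} = enat ` ?A" by auto
  have A0: "0 \<in> ?A" using assms(2) Zpd_0 unfolding pk_ideal_def by auto
  have fin: "finite ?A"
  proof (rule ccontr)
    assume "infinite ?A"
    then have "infinite (enat ` ?A)" by (simp add: finite_image_iff inj_on_def)
    moreover have "enat ` ?A \<noteq> {}" using A0 by blast
    ultimately have "Sup (enat ` ?A) = \<infinity>" unfolding Sup_enat_def by simp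
    then show False using assms(1) unfolding nu_def eq by simp
  qed
  have "Sup (enat ` ?A) = Max (enat ` ?A)" using fin A0 by (auto simp: Sup_enat_def)
  also have "\<dots> = enat (Max ?A)" using fin A0
    by (metis (no_types, lifting) Max_in empty_iff finite_imageI image_is_empty mono_Max_commute monoI enat_ord_simps(1))
  finally have "K = Max ?A" using assms(1) unfolding nu_def eq by simp
  moreover have "?A \<noteq> {}" using A0 by blast
  ultimately show "w \<in> pk_ideal p (enat K)" "w \<notin> pk_ideal p (enat (Suc K))"
    using Max_in[OF fin] Max_ge[OF fin, of "Suc K"] by auto
qed

lemma pc_diff: "q dvd (fst z - fst w) \<Longrightarrow> q dvd (snd z - snd w) \<Longrightarrow> pc q z w"
  by (simp add: pc_def cong_iff_dvd_diff)

primrec hh :: "nat \<Rightarrow> int" where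
  "hh 0 = 0" | "hh (Suc c) = hh c + int c"

lemma hh2: "2 * hh c = int c * (int c - 1)"
  by (induction c) (simp_all add: algebra_simps)

lemma powA: "pc (P^2) (pp D (1 + P*u1, P*u2) c) (1 + int c*P*u1, int c*P*u2)"
proof (induction c)
  case 0 then show ?case by simp
next
  case (Suc c)
  let ?X = "(1 + P*u1, P*u2)"
  have "pc (P^2) (pp D ?X (Suc c)) (pm D ?X (1 + int c*P*u1, int c*P*u2))"
    using pc_pm[OF pc_refl Suc.IH] by simp
  moreover have "pc (P^2) (pm D ?X (1 + int c*P*u1, int c*P*u2)) (1 + int (Suc c)*P*u1, int (Suc c)*P*u2)"
    by (rule pc_diff) (simp_all add: pm_def, algebra+)
  ultimately show ?case by (rule pc_trans)
qed

lemma powB: "pc (P^3) (pp D (1 + P*u1, P*u2) c)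
   (1 + int c*P*u1 + hh c*P^2*(u1^2 + D*u2^2), int c*P*u2 + hh c*P^2*(2*u1*u2))"
proof (induction c)
  case 0 then show ?case by simp
next
  case (Suc c)
  let ?X = "(1 + P*u1, P*u2)"
  let ?Y = "(1 + int c*P*u1 + hh c*P^2*(u1^2 + D*u2^2), int c*P*u2 + hh c*P^2*(2*u1*u2))"
  have "pc (P^3) (pp D ?X (Suc c)) (pm D ?X ?Y)"
    using pc_pm[OF pc_refl Suc.IH] by simp
  moreover have "pc (P^3) (pm D ?X ?Y) (1 + int (Suc c)*P*u1 + hh (Suc c)*P^2*(u1^2 + D*u2^2), int (Suc c)*P*u2 + hh (Suc c)*P^2*(2*u1*u2))"
    by (rule pc_diff) (simp_all add: pm_def, algebra+)
  ultimately show ?case by (rule pc_trans)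
qed

lemma powB_p:
  fixes p :: int
  assumes "odd p" "p > 0" "m \<ge> 1"
  shows "pc (p^(m+2)) (pp D (1 + p^m*u1, p^m*u2) (nat p)) (1 + p^(m+1)*u1, p^(m+1)*u2)"
proof -
  obtain m' where m: "m = Suc m'" using assms(3) by (cases m) auto
  define Q where "Q = p ^ m'"
  obtain t where t: "p - 1 = 2 * t" using assms(1) by (metis odd_two_times_div_two_succ add_diff_cancel_right')
  have hp: "hh (nat p) = p * t" using hh2[of "nat p"] assms(2) t by simp
  have pm_: "p ^ m = Q * p" "p ^ (m+1) = Q * p^2" "p^(m+2) = Q * p^3" unfolding m Q_def by (simp_all add: power2_eq_square power3_eq_cube)
  have "pc ((p^m)^3) (pp D (1 + p^m*u1, p^m*u2) (nat p))
     (1 + int (nat p)*p^m*u1 + hh (nat p)*(p^m)^2*(u1^2 + D*u2^2), int (nat p)*p^m*u2 + hh (nat p)*(p^m)^2*(2*u1*u2))"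
    by (rule powB)
  moreover have "p^(m+2) dvd (p^m)^3" unfolding pm_ by algebra
  ultimately have "pc (p^(m+2)) (pp D (1 + p^m*u1, p^m*u2) (nat p))
     (1 + int (nat p)*p^m*u1 + hh (nat p)*(p^m)^2*(u1^2 + D*u2^2), int (nat p)*p^m*u2 + hh (nat p)*(p^m)^2*(2*u1*u2))"
    using pc_dvd by blast
  moreover have "pc (p^(m+2)) (1 + int (nat p)*p^m*u1 + hh (nat p)*(p^m)^2*(u1^2 + D*u2^2), int (nat p)*p^m*u2 + hh (nat p)*(p^m)^2*(2*u1*u2))
      (1 + p^(m+1)*u1, p^(m+1)*u2)"
    unfolding hp pm_ using assms(2) by (intro pc_diff) (simp_all, algebra+)
  ultimately show ?thesis by (rule pc_trans)
qed

lemma pc_lin: "pc q z w \<Longrightarrow> \<exists>a b. z = (fst w + q * a, snd w + q * b)"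
  unfolding pc_def cong_iff_lin by (metis cong_iff_lin cong_sym prod.collapse)

lemma iterB:
  fixes p :: int
  assumes "prime p" "p \<ge> 3" "K \<ge> 1"
  shows "\<exists>U1 U2. pp D (1 + p^K*u1, p^K*u2) (nat p ^ j) = (1 + p^(K+j)*U1, p^(K+j)*U2)
            \<and> [U1 = u1] (mod p) \<and> [U2 = u2] (mod p)"
proof (induction j)
  case 0 then show ?case by (intro exI[of _ u1] exI[of _ u2]) simp
next
  case (Suc j)
  then obtain U1 U2 where U: "pp D (1 + p^K*u1, p^K*u2) (nat p ^ j) = (1 + p^(K+j)*U1, p^(K+j)*U2)"
    "[U1 = u1] (mod p)" "[U2 = u2] (mod p)" by blast
  have odd: "odd p" using assms(1,2) prime_odd_int[of p] by simp
  have "pp D (1 + p^K*u1, p^K*u2) (nat p ^ Suc j) = pp D (1 + p^(K+j)*U1, p^(K+j)*U2) (nat p)"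
  proof -
    have "nat p ^ Suc j = nat p ^ j * nat p" by simp
    then show ?thesis by (simp only: pp_mult U(1))
  qed
  moreover have "pc (p^(K+j+2)) (pp D (1 + p^(K+j)*U1, p^(K+j)*U2) (nat p)) (1 + p^(K+j+1)*U1, p^(K+j+1)*U2)"
    using powB_p[OF odd _ , of "K+j" D U1 U2] assms by simp
  ultimately obtain a b where ab: "pp D (1 + p^K*u1, p^K*u2) (nat p ^ Suc j) = (1 + p^(K+j+1)*U1 + p^(K+j+2)*a, p^(K+j+1)*U2 + p^(K+j+2)*b)"
    using pc_lin by fastforce
  have e: "(1 + p^(K+j+1)*U1 + p^(K+j+2)*a, p^(K+j+1)*U2 + p^(K+j+2)*b) = (1 + p^(K + Suc j)*(U1 + p*a), p^(K + Suc j)*(U2 + p*b))"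
    by (simp add: algebra_simps power_add)
  have "[U1 + p*a = u1] (mod p)" "[U2 + p*b = u2] (mod p)" using U(2,3)
    by (simp_all add: cong_def)
  then show ?case using ab e by metis
qed

lemma step:
  fixes p D w1 w2 t1 t2 U1 U2 e :: int
  assumes p: "prime p" "p \<ge> 3" and m: "m \<ge> 1"
    and nZ: "[nrm D (w1 + p^m*t1, w2 + p^m*t2) = nrm D (w1, w2)] (mod p^(m+1))"
    and nW: "[nrm D (w1,w2) = e] (mod p)" and e: "e = 1 \<or> e = -1"
    and U1: "p dvd U1" and U2: "\<not> p dvd U2"
  shows "\<exists>c::nat. pc (p^(m+1)) (w1 + p^m*t1, w2 + p^m*t2) (pm D (w1,w2) (1 + int c*p^m*U1, int c*p^m*U2))"
proof -
  obtain m' where mm: "m = Suc m'" using m by (cases m) auto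
  define Q where "Q = p ^ m'"
  have P: "p ^ m = Q * p" "p ^ (m+1) = Q * p * p" unfolding Q_def mm by simp_all
  have Q0: "Q \<noteq> 0" using p unfolding Q_def by simp
  define B where "B = w1*t1 - D*w2*t2"
  have "Q*p*p dvd (nrm D (w1 + p^m*t1, w2 + p^m*t2) - nrm D (w1, w2))"
    using nZ P by (simp add: cong_iff_dvd_diff dvd_diff_commute mult.commute mult.left_commute)
  moreover have "nrm D (w1 + p^m*t1, w2 + p^m*t2) - nrm D (w1, w2) = Q*p*(2*B) + Q*p*p*(Q*(t1*t1 - D*t2*t2))"
    unfolding P B_def nrm_def by (simp add: algebra_simps)
  ultimately have "Q*p*p dvd Q*p*(2*B)"
    by (metis dvd_add_left_iff dvd_triv_left)
  then have "p dvd 2*B" using Q0 p by simp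
  moreover have "\<not> p dvd 2" using p zdvd_imp_le[of p 2] by auto
  ultimately have "p dvd B" using p by (simp add: prime_dvd_mult_iff)
  then obtain b where b: "w1*t1 - D*w2*t2 = p*b" unfolding B_def by auto
  have "coprime U2 p" using prime_imp_coprime[OF p(1) U2] by (simp add: coprime_commute)
  then obtain v where v: "[U2 * v = 1] (mod p)" using cong_solve_coprime_int by blast
  then obtain g0 where "1 = U2*v + p*g0" unfolding cong_iff_lin by blast
  then have g: "U2*v = 1 + p*(-g0)" by simp
  define c where "c = nat ((e * (w1*t2 - w2*t1) * v) mod p)"
  have "int c = (e * (w1*t2 - w2*t1) * v) mod p" unfolding c_def using p by simp
  then have "[e * (w1*t2 - w2*t1) * v = int c] (mod p)" by (simp add: cong_def)
  then obtain r where r: "int c = e*(w1*t2 - w2*t1)*v + p*r" unfolding cong_iff_lin by blast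
  obtain s0 where "e = nrm D (w1,w2) + p*s0" using nW unfolding cong_iff_lin by blast
  then have s: "w1*w1 - D*(w2*w2) = e + p*(-s0)" unfolding nrm_def by simp
  obtain a1 where a1: "U1 = p*a1" using U1 by auto
  have e2: "e^2 = 1" using e by auto
  have k2: "p dvd (t2 - int c*(w1*U2 + w2*U1))" using a1 b s r g e2 by algebra
  have k1: "p dvd (t1 - int c*(w1*U1 + D*w2*U2))" using a1 b s r g e2 by algebra
  have "pc (p^(m+1)) (w1 + p^m*t1, w2 + p^m*t2) (pm D (w1,w2) (1 + int c*p^m*U1, int c*p^m*U2))"
  proof (rule pc_diff)
    obtain k where k: "t1 - int c*(w1*U1 + D*w2*U2) = p * k" using k1 by auto
    have "fst (w1 + p^m*t1, w2 + p^m*t2) - fst (pm D (w1,w2) (1 + int c*p^m*U1, int c*p^m*U2))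
       = Q*p*(t1 - int c*(w1*U1 + D*w2*U2))"
      unfolding P pm_def by (simp add: algebra_simps)
    also have "\<dots> = p^(m+1) * k" unfolding k P by simp
    finally show "p^(m+1) dvd fst (w1 + p^m*t1, w2 + p^m*t2) - fst (pm D (w1,w2) (1 + int c*p^m*U1, int c*p^m*U2))"
      by simp
  next
    obtain k where k: "t2 - int c*(w1*U2 + w2*U1) = p * k" using k2 by auto
    have "snd (w1 + p^m*t1, w2 + p^m*t2) - snd (pm D (w1,w2) (1 + int c*p^m*U1, int c*p^m*U2))
       = Q*p*(t2 - int c*(w1*U2 + w2*U1))"
      unfolding P pm_def by (simp add: algebra_simps)
    also have "\<dots> = p^(m+1) * k" unfolding k P by simp
    finally show "p^(m+1) dvd snd (w1 + p^m*t1, w2 + p^m*t2) - snd (pm D (w1,w2) (1 + int c*p^m*U1, int c*p^m*U2))"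
      by simp
  qed
  then show ?thesis by blast
qed

lemma cancel_lemma:
  fixes p x y :: int
  assumes p: "prime p" "p \<ge> 3" and m: "m \<ge> 1"
    and H: "p^(m+1) dvd (p^m * (2*x) + p^m*p^m*y)"
  shows "p dvd x"
proof -
  obtain m' where mm: "m = Suc m'" using m by (cases m) auto
  define Q where "Q = p ^ m'"
  have P: "p ^ m = Q * p" "p ^ (m+1) = Q * p * p" unfolding Q_def mm by simp_all
  have Q0: "Q \<noteq> 0" using p unfolding Q_def by simp
  have "Q*p*p dvd Q*p*(2*x) + Q*p*p*(Q*y)" using H unfolding P by (simp add: algebra_simps)
  then have "Q*p*p dvd Q*p*(2*x)" by (metis dvd_add_left_iff dvd_triv_left)
  then have "p dvd 2*x" using Q0 p by simp
  moreover have "\<not> p dvd 2" using p zdvd_imp_le[of p 2] by auto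
  ultimately show "p dvd x" using p by (simp add: prime_dvd_mult_iff)
qed

lemma pm1_pow: "(e::int) = 1 \<or> e = -1 \<Longrightarrow> e^n = 1 \<or> e^n = -1"
  by (induction n) auto

lemma pc_weaken: "pc (p^M) z w \<Longrightarrow> m \<le> M \<Longrightarrow> pc (p^m) z w" by (rule pc_pow_le)
lemma cong_weaken: "[a = b] (mod (p::int)^M) \<Longrightarrow> m \<le> M \<Longrightarrow> [a = b] (mod p^m)"
  by (meson cong_dvd_modulus le_imp_power_dvd)

lemma hard:
  fixes p D :: int and L Z :: ip and K M l i :: nat and e1 e2 :: int
  assumes p: "prime p" "p \<ge> 3" and K: "1 \<le> K" "K < M"
    and e1: "e1 = 1 \<or> e1 = -1" "[nrm D L = e1] (mod p^M)"
    and e2: "e2 = 1 \<or> e2 = -1" "[nrm D Z = e2] (mod p^M)"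
    and Zi: "pc (p^K) Z (pp D L i)"
    and mu1: "pc (p^K) (pp D L l) (1,0)" and mu2: "\<not> pc (p^Suc K) (pp D L l) (1,0)"
  shows "\<exists>n. pc (p^M) Z (pp D L n)"
proof -
  define \<mu> where "\<mu> = pp D L l"
  obtain u1 u2 where mu: "\<mu> = (1 + p^K*u1, p^K*u2)" using pc_lin[OF mu1] unfolding \<mu>_def by auto
  have el: "e1^l = 1 \<or> e1^l = -1" using e1(1) by (rule pm1_pow)
  have el2: "(e1^i = 1 \<or> e1^i = -1)" using e1(1) by (rule pm1_pow)
  have nmuM: "[nrm D \<mu> = e1^l] (mod p^M)" unfolding \<mu>_def nrm_pp using e1(2) by (rule cong_pow)
  have "[nrm D \<mu> = nrm D (1,0)] (mod p)" using pc_nrm[OF pc_weaken[OF mu1[folded \<mu>_def], of 1]] K by simp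
  then have "[nrm D \<mu> = 1] (mod p)" by (simp add: nrm_def)
  moreover have "[nrm D \<mu> = e1^l] (mod p)" using cong_weaken[OF nmuM, of 1] K by simp
  ultimately have "[e1^l = 1] (mod p)" by (meson cong_sym cong_trans)
  then have "e1^l = 1" using sign_eq[OF el _ _ p(2), of 1] by simp
  then have nmu: "[nrm D \<mu> = 1] (mod p^M)" using nmuM by simp
  have pu1: "p dvd u1"
  proof (rule cancel_lemma[OF p K(1)])
    have "[nrm D \<mu> = 1] (mod p^(K+1))" using cong_weaken[OF nmu, of "K+1"] K by simp
    then have "p^(K+1) dvd nrm D \<mu> - 1" by (simp add: cong_iff_dvd_diff)
    moreover have "nrm D \<mu> - 1 = p^K * (2*u1) + p^K*p^K*(u1*u1 - D*(u2*u2))"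
      unfolding mu nrm_def by (simp add: algebra_simps)
    ultimately show "p^(K+1) dvd p^K * (2*u1) + p^K*p^K*(u1*u1 - D*(u2*u2))" by simp
  qed
  have pu2: "\<not> p dvd u2"
  proof
    assume "p dvd u2"
    have "pc (p^Suc K) \<mu> (1,0)"
      by (rule pc_diff) (use pu1 \<open>p dvd u2\<close> in \<open>simp_all add: mu mult_dvd_mono\<close>)
    then show False using mu2 unfolding \<mu>_def by simp
  qed
  have IND: "K + j \<le> M \<Longrightarrow> \<exists>a. pc (p^(K+j)) Z (pm D (pp D L i) (pp D \<mu> a))" for j
  proof (induction j)
    case 0
    show ?case using Zi by (intro exI[of _ 0]) simp
  next
    case (Suc j)
    define m where "m = K + j"
    have m1: "m \<ge> 1" "m + 1 \<le> M" using K Suc.prems unfolding m_def by auto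
    obtain a where a: "pc (p^m) Z (pm D (pp D L i) (pp D \<mu> a))" using Suc m_def by auto
    define W where "W = pm D (pp D L i) (pp D \<mu> a)"
    obtain t1 t2 where Zt: "Z = (fst W + p^m*t1, snd W + p^m*t2)" using pc_lin[OF a[folded W_def]] by auto
    have nW: "[nrm D W = e1^i] (mod p^M)"
    proof -
      have "nrm D W = nrm D L ^ i * nrm D \<mu> ^ a" unfolding W_def by (simp add: nrm_pm nrm_pp)
      moreover have "[nrm D L ^ i * nrm D \<mu> ^ a = e1^i * 1^a] (mod p^M)"
        using e1(2) nmu by (intro cong_mult cong_pow)
      ultimately show ?thesis by simp
    qed
    have "[nrm D Z = nrm D W] (mod p)" using pc_nrm[OF pc_weaken[OF a[folded W_def], of 1]] m1 by simp
    moreover have "[nrm D Z = e2] (mod p)" "[nrm D W = e1^i] (mod p)"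
      using cong_weaken[OF e2(2), of 1] cong_weaken[OF nW, of 1] m1 by auto
    ultimately have "[e2 = e1^i] (mod p)" by (meson cong_sym cong_trans)
    then have "e2 = e1^i" using sign_eq[OF e2(1) el2 _ p(2)] by simp
    then have "[nrm D Z = nrm D W] (mod p^M)" using e2(2) nW by (meson cong_sym cong_trans)
    then have "[nrm D Z = nrm D W] (mod p^(m+1))" using cong_weaken m1 by blast
    then have nZW: "[nrm D (fst W + p^m*t1, snd W + p^m*t2) = nrm D (fst W, snd W)] (mod p^(m+1))"
      using Zt by simp
    obtain U1 U2 where U: "pp D \<mu> (nat p ^ j) = (1 + p^m*U1, p^m*U2)" "[U1 = u1] (mod p)" "[U2 = u2] (mod p)"
      using iterB[OF p K(1), of D u1 u2 j] unfolding mu m_def by blast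
    have pU1: "p dvd U1" using U(2) pu1 by (simp add: cong_dvd_iff)
    have pU2: "\<not> p dvd U2" using U(3) pu2 by (simp add: cong_dvd_iff)
    have nWp: "[nrm D (fst W, snd W) = e1^i] (mod p)" using cong_weaken[OF nW, of 1] m1 by simp
    obtain c :: nat where c: "pc (p^(m+1)) (fst W + p^m*t1, snd W + p^m*t2) (pm D (fst W, snd W) (1 + int c*p^m*U1, int c*p^m*U2))"
      using step[OF p m1(1) nZW nWp el2 pU1 pU2] by blast
    have "pc ((p^m)^2) (pp D (1 + p^m*U1, p^m*U2) c) (1 + int c*p^m*U1, int c*p^m*U2)" by (rule powA)
    moreover have "p^(m+1) dvd (p^m)^2"
    proof -
      have "(p^m)^2 = p^(m+m)" by (simp add: power2_eq_square power_add)
      moreover have "p^(m+1) dvd p^(m+m)" using m1 by (intro le_imp_power_dvd) simp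
      ultimately show ?thesis by simp
    qed
    ultimately have "pc (p^(m+1)) (pp D (1 + p^m*U1, p^m*U2) c) (1 + int c*p^m*U1, int c*p^m*U2)"
      using pc_dvd by blast
    then have "pc (p^(m+1)) (pm D W (pp D (1 + p^m*U1, p^m*U2) c)) (pm D W (1 + int c*p^m*U1, int c*p^m*U2))"
      by (intro pc_pm pc_refl)
    moreover have "pc (p^(m+1)) Z (pm D W (1 + int c*p^m*U1, int c*p^m*U2))"
      using c Zt by simp
    ultimately have "pc (p^(m+1)) Z (pm D W (pp D (1 + p^m*U1, p^m*U2) c))"
      using pc_sym pc_trans by blast
    moreover have "pm D W (pp D (1 + p^m*U1, p^m*U2) c) = pm D (pp D L i) (pp D \<mu> (a + nat p ^ j * c))"
      unfolding W_def U(1)[symmetric] by (simp add: pp_add pp_mult pm_assoc)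
    ultimately show ?case unfolding m_def by auto
  qed
  obtain a where "pc (p^M) Z (pm D (pp D L i) (pp D \<mu> a))" using IND[of "M - K"] K by auto
  moreover have "pm D (pp D L i) (pp D \<mu> a) = pp D L (i + l * a)"
    unfolding \<mu>_def by (simp add: pp_add pp_mult)
  ultimately show ?thesis by auto
qed

definition cnj :: "ip \<Rightarrow> ip" where "cnj z = (fst z, - snd z)"

lemma pp_scal: "pp D (c, 0) n = (c ^ n, 0)"
  by (induction n) (simp_all add: pm_def)

lemma pm_scal: "pm D (c, 0) w = (c * fst w, c * snd w)"
  by (simp add: pm_def)

lemma cancel_pp:
  assumes e: "e = 1 \<or> e = -1" "[nrm D L = e] (mod q)"
    and H: "pc q (pp D L a) (pp D L (a + b))"
  shows "pc q (pp D L b) (1, 0)"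
proof -
  define C where "C = pm D (e^a, 0) (pp D (cnj L) a)"
  have CL: "pm D C (pp D L a) = (e^a * nrm D L ^ a, 0)"
  proof -
    have "pm D C (pp D L a) = pm D (e^a, 0) (pp D (pm D (cnj L) L) a)"
      unfolding C_def by (simp add: pm_assoc pp_pm)
    also have "pm D (cnj L) L = (nrm D L, 0)" by (simp add: pm_def cnj_def nrm_def)
    finally show ?thesis by (simp add: pp_scal pm_scal)
  qed
  have "[e^a * nrm D L ^ a = e^a * e^a] (mod q)" using e(2) by (intro cong_mult cong_pow) auto
  moreover have "e^a * e^a = 1" using e(1) by (auto simp: power_mult_distrib[symmetric])
  ultimately have "pc q (pm D C (pp D L a)) (1, 0)" unfolding CL pc_def by simp
  moreover have "pc q (pm D C (pp D L a)) (pm D C (pp D L (a + b)))" using H by (intro pc_pm pc_refl)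
  moreover have "pm D C (pp D L (a + b)) = pm D (pm D C (pp D L a)) (pp D L b)"
    by (simp add: pp_add pm_assoc)
  moreover have "pc q (pm D (pm D C (pp D L a)) (pp D L b)) (pm D (1,0) (pp D L b))"
    using calculation(1) by (intro pc_pm pc_refl)
  ultimately have "pc q (pp D L b) (pm D C (pp D L a))"
    using pc_sym pc_trans by (metis pm_one(1))
  then show ?thesis using \<open>pc q (pm D C (pp D L a)) (1, 0)\<close> pc_trans by blast
qed

lemma pmd_pmd_dvd: "r dvd q \<Longrightarrow> pmd r (pmd q z) = pmd r z"
  by (simp add: pmd_def mod_mod_cancel)

lemma pp_one: "pp D (1, 0) n = (1, 0)"
  using pp_scal[of D 1 n] by simp

locale thm7_ctx =
  fixes p :: int and d :: zp and lam :: zpd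
  assumes p_prime: "prime p" and p3: "p \<ge> 3" and dZ: "d \<in> Zp p" and lamU: "lam \<in> U0 p d"
begin

abbreviation P :: "nat \<Rightarrow> zpd" where "P n \<equiv> zpd_pow p d lam n"

lemma p0: "p > 0" using p3 by simp

lemma lamZ: "lam \<in> Zpd p" using lamU unfolding U0_def by auto

lemma PZ: "P n \<in> Zpd p" using Zpd_pow[OF lamZ dZ p0] .

lemma lam_sign: "\<exists>e. (e = 1 \<or> e = -1) \<and> (\<forall>M. [nrm (d M) (rp M lam) = e] (mod p ^ M))"
  using lamU U0_iff[OF p0 dZ] by blast

lemma PU: "P n \<in> U0 p d"
proof -
  obtain e where e: "e = 1 \<or> e = -1" "\<And>M. [nrm (d M) (rp M lam) = e] (mod p ^ M)" using lam_sign by blast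
  have "[nrm (d M) (rp M (P n)) = e ^ n] (mod p ^ M)" for M
  proof -
    have "pc (p^M) (rp M (P n)) (pp (d M) (rp M lam) n)" unfolding rp_pow by (rule pc_pmd_self)
    then have "[nrm (d M) (rp M (P n)) = nrm (d M) (pp (d M) (rp M lam) n)] (mod p^M)" by (rule pc_nrm)
    moreover have "[nrm (d M) (pp (d M) (rp M lam) n) = e ^ n] (mod p^M)"
      unfolding nrm_pp using e(2) by (rule cong_pow)
    ultimately show ?thesis by (rule cong_trans)
  qed
  then show ?thesis using U0_iff[OF p0 dZ] PZ pm1_pow[OF e(1)] by blast
qed

lemma rpj_pow: "j \<le> M \<Longrightarrow> rp j (P n) = pmd (p^j) (pp (d M) (rp M lam) n)"
proof -
  assume "j \<le> M"
  then have "rp j (P n) = pmd (p^j) (rp M (P n))" using rp_coh[OF PZ p0] by blast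
  also have "\<dots> = pmd (p^j) (pp (d M) (rp M lam) n)" unfolding rp_pow
    by (rule pmd_pmd_dvd) (rule le_imp_power_dvd[OF \<open>j \<le> M\<close>])
  finally show ?thesis .
qed

lemma rp_P_eq: "rp j (P a) = rp j (P b) \<longleftrightarrow> pc (p^j) (pp (d j) (rp j lam) a) (pp (d j) (rp j lam) b)"
  by (simp add: rp_pow pc_pmd)

lemma P_cancel: "rp j (P a) = rp j (P (a + b)) \<Longrightarrow> rp j (P b) = rp j (P 0)"
proof -
  assume H: "rp j (P a) = rp j (P (a + b))"
  obtain e where e: "e = 1 \<or> e = -1" "\<And>M. [nrm (d M) (rp M lam) = e] (mod p ^ M)" using lam_sign by blast
  have "pc (p^j) (pp (d j) (rp j lam) b) (1, 0)"
    using cancel_pp[OF e(1) e(2)] H unfolding rp_P_eq by blast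
  then show ?thesis unfolding rp_P_eq by simp
qed

lemma P_period: "rp j (P l) = rp j (P 0) \<Longrightarrow> rp j (P n) = rp j (P (n mod l))"
proof -
  assume H: "rp j (P l) = rp j (P 0)"
  let ?L = "rp j lam" and ?D = "d j"
  have H': "pc (p^j) (pp ?D ?L l) (1,0)" using H unfolding rp_P_eq by simp
  have "pp ?D ?L n = pm ?D (pp ?D ?L (n mod l)) (pp ?D (pp ?D ?L l) (n div l))"
  proof -
    have "n = n mod l + l * (n div l)" by simp
    then have "pp ?D ?L n = pp ?D ?L (n mod l + l * (n div l))" by simp
    then show ?thesis by (simp only: pp_add pp_mult)
  qed
  moreover have "pc (p^j) (pm ?D (pp ?D ?L (n mod l)) (pp ?D (pp ?D ?L l) (n div l))) (pm ?D (pp ?D ?L (n mod l)) (pp ?D (1,0) (n div l)))"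
    using H' by (intro pc_pm pc_refl pc_pp)
  ultimately have "pc (p^j) (pp ?D ?L n) (pp ?D ?L (n mod l))" by (simp add: pp_one)
  then show ?thesis unfolding rp_P_eq .
qed

lemma exists_order: "\<exists>l. 1 \<le> l \<and> rp 1 (P l) = rp 1 (P 0)"
proof -
  have fin: "finite ({0..<p} \<times> {0..<p})" by simp
  have "rp 1 (P n) \<in> {0..<p} \<times> {0..<p}" for n
  proof -
    have "rp 1 (P n) = pmd p (rp 1 (P n))" using rp_Zpd[OF PZ, of 1] by simp
    moreover have "pmd p (rp 1 (P n)) \<in> {0..<p} \<times> {0..<p}" using p0 by (simp add: pmd_def mem_Times_iff)
    ultimately show ?thesis by simp
  qed
  then have "range (\<lambda>n. rp 1 (P n)) \<subseteq> {0..<p} \<times> {0..<p}" by blast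
  then have "finite (range (\<lambda>n. rp 1 (P n)))" using fin finite_subset by blast
  then have "\<not> inj (\<lambda>n. rp 1 (P n))" using finite_imageD infinite_UNIV_nat by blast
  then obtain a b where ab: "a \<noteq> b" "rp 1 (P a) = rp 1 (P b)" unfolding inj_def by blast
  show ?thesis
  proof (cases "a < b")
    case True
    then have "rp 1 (P (b - a)) = rp 1 (P 0)" using P_cancel[of 1 a "b - a"] ab by simp
    then show ?thesis using True by (intro exI[of _ "b - a"]) simp
  next
    case False
    then have "rp 1 (P (a - b)) = rp 1 (P 0)" using P_cancel[of 1 b "a - b"] ab False by simp
    then show ?thesis using False ab by (intro exI[of _ "a - b"]) simp
  qed
qed

lemma sub_ideal_P: "zpd_sub p (P a) (P b) \<in> pk_ideal p k \<longleftrightarrow> (\<forall>j. enat j \<le> k \<longrightarrow> rp j (P a) = rp j (P b))"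
  by (rule sub_ideal[OF PZ PZ p0])

lemma order_cond: "(1 \<le> l \<and> zpd_sub p (P l) (zpd_one p) \<in> pk_ideal p (enat 1)) \<longleftrightarrow> (1 \<le> l \<and> rp 1 (P l) = rp 1 (P 0))"
proof -
  have "zpd_sub p (P l) (P 0) \<in> pk_ideal p (enat 1) \<longleftrightarrow> rp 1 (P l) = rp 1 (P 0)"
  proof -
    have "(\<forall>j. enat j \<le> enat 1 \<longrightarrow> rp j (P l) = rp j (P 0)) \<longleftrightarrow> rp 1 (P l) = rp 1 (P 0)"
    proof
      assume "\<forall>j. enat j \<le> enat 1 \<longrightarrow> rp j (P l) = rp j (P 0)"
      then show "rp 1 (P l) = rp 1 (P 0)" by blast
    next
      assume H: "rp 1 (P l) = rp 1 (P 0)"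
      show "\<forall>j. enat j \<le> enat 1 \<longrightarrow> rp j (P l) = rp j (P 0)"
      proof (intro allI impI)
        fix j assume "enat j \<le> enat 1"
        then have "j \<le> 1" by simp
        then show "rp j (P l) = rp j (P 0)" using rp_eq_le[OF PZ PZ p0 _ H] by blast
      qed
    qed
    then show ?thesis unfolding sub_ideal_P .
  qed
  moreover have "zpd_one p = P 0" by simp
  ultimately show ?thesis by (simp only:)
qed

lemma mod_order_props:
  assumes "l = mod_order p d lam"
  shows "1 \<le> l" "rp 1 (P l) = rp 1 (P 0)" "\<And>b. 1 \<le> b \<Longrightarrow> b < l \<Longrightarrow> rp 1 (P b) \<noteq> rp 1 (P 0)"
proof -
  have l: "l = (LEAST l. 1 \<le> l \<and> rp 1 (P l) = rp 1 (P 0))"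
    using assms unfolding mod_order_def order_cond .
  obtain l0 where "1 \<le> l0 \<and> rp 1 (P l0) = rp 1 (P 0)" using exists_order by blast
  then have "1 \<le> l \<and> rp 1 (P l) = rp 1 (P 0)" unfolding l by (rule LeastI)
  then show "1 \<le> l" "rp 1 (P l) = rp 1 (P 0)" by auto
  show "\<And>b. 1 \<le> b \<Longrightarrow> b < l \<Longrightarrow> rp 1 (P b) \<noteq> rp 1 (P 0)"
    unfolding l using not_less_Least by blast
qed

lemma distinct_P:
  assumes "l = mod_order p d lam" "i < l" "j < l" "i \<noteq> j"
  shows "rp 1 (P i) \<noteq> rp 1 (P j)"
proof
  assume H: "rp 1 (P i) = rp 1 (P j)"
  show False
  proof (cases "i < j")
    case True
    then have "rp 1 (P (j - i)) = rp 1 (P 0)" using P_cancel[of 1 i "j - i"] H by simp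
    moreover have "1 \<le> j - i" "j - i < l" using True assms by auto
    ultimately show False using mod_order_props(3)[OF assms(1)] by blast
  next
    case False
    then have "rp 1 (P (i - j)) = rp 1 (P 0)" using P_cancel[of 1 j "i - j"] H False by simp
    moreover have "1 \<le> i - j" "i - j < l" using False assms by auto
    ultimately show False using mod_order_props(3)[OF assms(1)] by blast
  qed
qed

end

context thm7_ctx
begin

lemma closure_iff: "z \<in> zpd_closure p {P n | n. True} \<longleftrightarrow> z \<in> Zpd p \<and> (\<forall>m. \<exists>n. rp m (P n) = rp m z)"
proof -
  have "(\<exists>s\<in>{P n |n. True}. fst s m = fst z m \<and> snd s m = snd z m) \<longleftrightarrow> (\<exists>n. rp m (P n) = rp m z)" for m
    unfolding rp_def by blast
  then show ?thesis unfolding zpd_closure_def by blast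
qed

lemma k_inf:
  assumes "l = mod_order p d lam" "nu p (zpd_sub p (P l) (zpd_one p)) = \<infinity>"
  shows "P l = P 0"
proof -
  have wZ: "zpd_sub p (P l) (P 0) \<in> Zpd p" using Zpd_sub[OF PZ PZ p0] .
  have "zpd_sub p (P l) (P 0) \<in> pk_ideal p (enat j)" for j using nu_inf[OF _ wZ] assms(2) by simp
  then have "rp j (P l) = rp j (P 0)" for j using sub_ideal_P by blast
  then show ?thesis by (intro Zpd_eqI[OF PZ PZ])
qed

lemma k_fin:
  assumes "l = mod_order p d lam" "nu p (zpd_sub p (P l) (zpd_one p)) = enat K"
  shows "1 \<le> K" "\<And>j. j \<le> K \<Longrightarrow> rp j (P l) = rp j (P 0)" "rp (Suc K) (P l) \<noteq> rp (Suc K) (P 0)"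
proof -
  have wZ: "zpd_sub p (P l) (P 0) \<in> Zpd p" using Zpd_sub[OF PZ PZ p0] .
  have n: "nu p (zpd_sub p (P l) (P 0)) = enat K" using assms(2) by simp
  have A: "zpd_sub p (P l) (P 0) \<in> pk_ideal p (enat K)" using nu_fin(1)[OF n wZ] .
  have B: "zpd_sub p (P l) (P 0) \<notin> pk_ideal p (enat (Suc K))" using nu_fin(2)[OF n wZ] .
  show A': "\<And>j. j \<le> K \<Longrightarrow> rp j (P l) = rp j (P 0)" using A unfolding sub_ideal_P by simp
  from B obtain j where j: "j \<le> Suc K" "rp j (P l) \<noteq> rp j (P 0)" unfolding sub_ideal_P by auto
  then have "j = Suc K" using A' by (metis le_SucE)
  then show "rp (Suc K) (P l) \<noteq> rp (Suc K) (P 0)" using j by simp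
  show "1 \<le> K"
  proof (rule ccontr)
    assume "\<not> 1 \<le> K"
    then have "K = 0" by simp
    then show False using \<open>rp (Suc K) (P l) \<noteq> rp (Suc K) (P 0)\<close> mod_order_props(2)[OF assms(1)] by simp
  qed
qed

lemma part1_sub:
  assumes l: "l = mod_order p d lam" and k: "k = nu p (zpd_sub p (P l) (zpd_one p))"
    and z: "z \<in> zpd_closure p {P n | n. True}"
  shows "\<exists>i<l. z \<in> zpd_coset p (P i) k \<inter> U0 p d"
proof -
  have zZ: "z \<in> Zpd p" and zc: "\<And>m. \<exists>n. rp m (P n) = rp m z" using z unfolding closure_iff by auto
  have zU: "z \<in> U0 p d"
    using U0_closed[OF p3 dZ zZ] zc PU by metis
  have l1: "1 \<le> l" using mod_order_props(1)[OF l] .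
  show ?thesis
  proof (cases k)
    case (enat K)
    obtain n where n: "rp K (P n) = rp K z" using zc by blast
    have "rp j z = rp j (P (n mod l))" if "enat j \<le> k" for j
    proof -
      have jK: "j \<le> K" using that enat by simp
      have "rp j z = rp j (P n)" using rp_eq_le[OF zZ PZ p0 jK] n by simp
      also have "\<dots> = rp j (P (n mod l))"
        using P_period k_fin(2)[OF l k[symmetric, unfolded enat] jK] by blast
      finally show ?thesis .
    qed
    then have "z \<in> zpd_coset p (P (n mod l)) k" using coset_iff[OF PZ p0] zZ by blast
    moreover have "n mod l < l" using l1 by simp
    ultimately show ?thesis using zU by blast
  next
    case infinity
    have Pl: "P l = P 0" using k_inf[OF l] k infinity by simp
    have per: "rp m (P n) = rp m (P (n mod l))" for m n using P_period Pl by simp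
    have "\<exists>i<l. z = P i"
    proof (rule ccontr)
      assume "\<not> (\<exists>i<l. z = P i)"
      then have "\<forall>i<l. \<exists>m. rp m z \<noteq> rp m (P i)" using Zpd_eqI[OF zZ PZ] by blast
      then obtain mi where mi: "\<And>i. i < l \<Longrightarrow> rp (mi i) z \<noteq> rp (mi i) (P i)" by metis
      define M where "M = Max (mi ` {..<l})"
      obtain n where n: "rp M (P n) = rp M z" using zc by blast
      have "n mod l < l" using l1 by simp
      have "mi (n mod l) \<le> M" unfolding M_def using \<open>n mod l < l\<close> by (intro Max_ge) auto
      moreover have "rp M z = rp M (P (n mod l))" using n per by simp
      ultimately have "rp (mi (n mod l)) z = rp (mi (n mod l)) (P (n mod l))"
        using rp_eq_le[OF zZ PZ p0] by blast
      then show False using mi \<open>n mod l < l\<close> by blast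
    qed
    then obtain i where i: "i < l" "z = P i" by blast
    then have "z \<in> zpd_coset p (P i) k" using coset_iff[OF PZ p0] PZ by blast
    then show ?thesis using i zU by blast
  qed
qed

lemma part1_sup:
  assumes l: "l = mod_order p d lam" and k: "k = nu p (zpd_sub p (P l) (zpd_one p))"
    and i: "i < l" and z: "z \<in> zpd_coset p (P i) k" "z \<in> U0 p d"
  shows "z \<in> zpd_closure p {P n | n. True}"
proof -
  have zZ: "z \<in> Zpd p" and zi: "\<And>j. enat j \<le> k \<Longrightarrow> rp j z = rp j (P i)"
    using z(1) unfolding coset_iff[OF PZ p0] by auto
  have "\<exists>n. rp m (P n) = rp m z" for m
  proof (cases "enat m \<le> k")
    case True then show ?thesis using zi by metis
  next
    case False
    then obtain K where K: "k = enat K" "K < m" by (cases k) auto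
    have kf: "nu p (zpd_sub p (P l) (zpd_one p)) = enat K" using k K by simp
    obtain e1 where e1: "e1 = 1 \<or> e1 = -1" "[nrm (d m) (rp m lam) = e1] (mod p ^ m)" using lam_sign by blast
    obtain e2 where e2: "e2 = 1 \<or> e2 = -1" "[nrm (d m) (rp m z) = e2] (mod p ^ m)"
      using z(2) U0_iff[OF p0 dZ] by blast
    have Km: "K \<le> m" "Suc K \<le> m" using K by auto
    have "rp K z = rp K (P i)" using zi K by simp
    then have "pmd (p^K) (rp m z) = pmd (p^K) (pp (d m) (rp m lam) i)"
      using rp_coh[OF zZ p0 Km(1)] rpj_pow[OF Km(1)] by simp
    then have Zi: "pc (p^K) (rp m z) (pp (d m) (rp m lam) i)" by (simp add: pc_pmd)
    have "rp K (P l) = rp K (P 0)" using k_fin(2)[OF l kf, of K] by simp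
    then have "pmd (p^K) (pp (d m) (rp m lam) l) = pmd (p^K) (pp (d m) (rp m lam) 0)"
      unfolding rpj_pow[OF Km(1)] .
    then have mu1: "pc (p^K) (pp (d m) (rp m lam) l) (1,0)" by (simp add: pc_pmd)
    have "pmd (p^Suc K) (pp (d m) (rp m lam) l) \<noteq> pmd (p^Suc K) (pp (d m) (rp m lam) 0)"
      using k_fin(3)[OF l kf] unfolding rpj_pow[OF Km(2)] .
    then have mu2: "\<not> pc (p^Suc K) (pp (d m) (rp m lam) l) (1,0)" by (simp add: pc_pmd)
    obtain n where "pc (p^m) (rp m z) (pp (d m) (rp m lam) n)"
      using hard[OF p_prime p3 k_fin(1)[OF l kf] K(2) e1 e2 Zi mu1 mu2] by blast
    then have "pmd (p^m) (rp m z) = pmd (p^m) (pp (d m) (rp m lam) n)" by (simp add: pc_pmd)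
    then have "rp m z = rp m (P n)" using rp_Zpd[OF zZ] rp_pow by simp
    then show ?thesis by metis
  qed
  then show ?thesis unfolding closure_iff using zZ by blast
qed

lemma part1:
  assumes l: "l = mod_order p d lam" and k: "k = nu p (zpd_sub p (P l) (zpd_one p))"
  shows "zpd_closure p {P n | n. True} = (\<Union>i<l. zpd_coset p (P i) k \<inter> U0 p d)"
  using part1_sub[OF l k] part1_sup[OF l k] by blast

lemma part2:
  assumes l: "l = mod_order p d lam" and k: "k = nu p (zpd_sub p (P l) (zpd_one p))"
    and ij: "i < l" "j < l" "i \<noteq> j"
  shows "(zpd_coset p (P i) k \<inter> U0 p d) \<inter> (zpd_coset p (P j) k \<inter> U0 p d) = {}"
proof (rule ccontr)
  assume "(zpd_coset p (P i) k \<inter> U0 p d) \<inter> (zpd_coset p (P j) k \<inter> U0 p d) \<noteq> {}"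
  then obtain z where z: "z \<in> zpd_coset p (P i) k" "z \<in> zpd_coset p (P j) k" by blast
  have k1: "enat 1 \<le> k"
  proof (cases k)
    case (enat K) then show ?thesis using k_fin(1)[OF l, of K] k by simp
  qed simp
  have "rp 1 z = rp 1 (P i)" "rp 1 z = rp 1 (P j)"
    using z k1 unfolding coset_iff[OF PZ p0] by auto
  then show False using distinct_P[OF l ij] by simp
qed

end

lemma cong_range_eq: "[a = b] (mod (p::int)) \<Longrightarrow> 0 \<le> a \<Longrightarrow> a < p \<Longrightarrow> 0 \<le> b \<Longrightarrow> b < p \<Longrightarrow> a = b"
  by (simp add: cong_def mod_pos_pos_trivial)

lemma prime_cancel: "prime (p::int) \<Longrightarrow> p dvd a * b \<Longrightarrow> \<not> p dvd a \<Longrightarrow> p dvd b"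
  by (simp add: prime_dvd_mult_iff)

locale cnt_ctx =
  fixes p D :: int
  assumes p_prime: "prime p" and p3: "p \<ge> 3" and nsq: "\<And>x. \<not> [x * x = D] (mod p)"
begin

definition R :: "ip set" where "R = {0..<p} \<times> {0..<p}"
definition S1 :: "ip set" where "S1 = {z \<in> R. [nrm D z = 1] (mod p)}"
definition Sm :: "ip set" where "Sm = {z \<in> R. [nrm D z = -1] (mod p)}"

lemma finR: "finite R" unfolding R_def by simp

lemma nD: "\<not> p dvd D" using nsq[of 0] by (simp add: cong_iff_dvd_diff)

lemma nsq_dvd: "\<not> p dvd (t*t - D)" using nsq[of t] by (simp add: cong_iff_dvd_diff)

definition tt :: "ip \<Rightarrow> int" where
  "tt z = (SOME t. 0 \<le> t \<and> t < p \<and> [t * snd z = 1 + fst z] (mod p))"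

definition f :: "ip \<Rightarrow> int" where
  "f z = (if snd z = 0 then (if fst z = 1 then 0 else p) else tt z)"

lemma tt_ex:
  assumes "z \<in> R" "snd z \<noteq> 0"
  shows "0 \<le> tt z \<and> tt z < p \<and> [tt z * snd z = 1 + fst z] (mod p)"
proof -
  have "\<not> p dvd snd z" using assms unfolding R_def by (auto simp: zdvd_not_zless)
  then have "coprime p (snd z)" by (rule prime_imp_coprime[OF p_prime])
  then have "coprime (snd z) p" by (simp add: coprime_commute)
  then obtain v where v: "[snd z * v = 1] (mod p)" using cong_solve_coprime_int by blast
  define t where "t = ((1 + fst z) * v) mod p"
  have "[t * snd z = (1 + fst z) * (snd z * v)] (mod p)" unfolding t_def
    by (simp add: cong_def mod_simps algebra_simps)
  also have "[(1 + fst z) * (snd z * v) = (1 + fst z) * 1] (mod p)" using v by (intro cong_mult cong_refl)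
  finally have "[t * snd z = 1 + fst z] (mod p)" by simp
  moreover have "0 \<le> t" "t < p" unfolding t_def using p3 by simp_all
  ultimately have "\<exists>t. 0 \<le> t \<and> t < p \<and> [t * snd z = 1 + fst z] (mod p)" by blast
  then show ?thesis unfolding tt_def by (rule someI_ex)
qed


lemma S1_R: "z \<in> S1 \<Longrightarrow> z \<in> R" unfolding S1_def by simp
lemma R_bounds: "z \<in> R \<Longrightarrow> 0 \<le> fst z \<and> fst z < p \<and> 0 \<le> snd z \<and> snd z < p"
  unfolding R_def by (auto simp: mem_Times_iff)

lemma S1_nrm: "z \<in> S1 \<Longrightarrow> p dvd (fst z * fst z - D * (snd z * snd z) - 1)"
  unfolding S1_def nrm_def by (simp add: cong_iff_dvd_diff)

lemma tt_pos:
  assumes "z \<in> S1" "snd z \<noteq> 0"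
  shows "tt z \<noteq> 0"
proof
  assume "tt z = 0"
  then have "[0 = 1 + fst z] (mod p)" using tt_ex[OF S1_R[OF assms(1)] assms(2)] by simp
  then have "[1 + fst z = 0] (mod p)" by (rule cong_sym)
  then have h1: "p dvd (1 + fst z)" by (simp add: cong_0_iff)
  have h2: "p dvd (fst z * fst z - D * (snd z * snd z) - 1)" using S1_nrm[OF assms(1)] .
  have "p dvd D * (snd z * snd z)" using h1 h2 by algebra
  moreover have "\<not> p dvd snd z" using R_bounds[OF S1_R[OF assms(1)]] assms(2) by (auto simp: zdvd_not_zless)
  ultimately show False using nD p_prime by (simp add: prime_dvd_mult_iff)
qed

lemma S1_y0:
  assumes "z \<in> S1" "snd z = 0"
  shows "fst z = 1 \<or> fst z = p - 1"
proof -
  have "p dvd (fst z - 1) * (fst z + 1)" using S1_nrm[OF assms(1)] assms(2) by (simp add: algebra_simps)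
  then have "p dvd (fst z - 1) \<or> p dvd (fst z + 1)" using p_prime by (simp add: prime_dvd_mult_iff)
  moreover have "0 \<le> fst z" "fst z < p" using R_bounds[OF S1_R[OF assms(1)]] by auto
  moreover have "0 \<le> p - 1" "p - 1 < p" "(1::int) < p" using p3 by auto
  moreover have "p dvd (fst z - 1) \<Longrightarrow> fst z = 1"
  proof -
    assume "p dvd (fst z - 1)"
    then have "[fst z = 1] (mod p)" by (simp add: cong_iff_dvd_diff)
    then show "fst z = 1" using cong_range_eq \<open>0 \<le> fst z\<close> \<open>fst z < p\<close> \<open>(1::int) < p\<close> by simp
  qed
  moreover have "p dvd (fst z + 1) \<Longrightarrow> fst z = p - 1"
  proof -
    assume "p dvd (fst z + 1)"
    then have "p dvd (fst z + 1) - p" by (rule dvd_diff) simp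
    moreover have "fst z - (p - 1) = (fst z + 1) - p" by simp
    ultimately have "p dvd (fst z - (p - 1))" by metis
    then have "[fst z = p - 1] (mod p)" by (simp add: cong_iff_dvd_diff)
    then show "fst z = p - 1" using cong_range_eq \<open>0 \<le> fst z\<close> \<open>fst z < p\<close> \<open>0 \<le> p - 1\<close> \<open>p - 1 < p\<close> by blast
  qed
  ultimately show ?thesis by blast
qed

lemma key_t:
  assumes "z \<in> S1" "snd z \<noteq> 0"
  shows "p dvd ((tt z * tt z - D) * snd z - 2 * tt z)"
proof -
  have h1: "p dvd (tt z * snd z - (1 + fst z))" using tt_ex[OF S1_R[OF assms(1)] assms(2)] by (simp add: cong_iff_dvd_diff)
  have h2: "p dvd (fst z * fst z - D * (snd z * snd z) - 1)" using S1_nrm[OF assms(1)] .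
  have "p dvd snd z * ((tt z * tt z - D) * snd z - 2 * tt z)" using h1 h2 by algebra
  moreover have "\<not> p dvd snd z" using R_bounds[OF S1_R[OF assms(1)]] assms(2) by (auto simp: zdvd_not_zless)
  ultimately show ?thesis using p_prime by (simp add: prime_dvd_mult_iff)
qed

lemma f_inj: "inj_on f S1"
proof (rule inj_onI)
  fix z z' assume z: "z \<in> S1" and z': "z' \<in> S1" and fe: "f z = f z'"
  have bz: "0 \<le> fst z \<and> fst z < p \<and> 0 \<le> snd z \<and> snd z < p" using R_bounds[OF S1_R[OF z]] .
  have bz': "0 \<le> fst z' \<and> fst z' < p \<and> 0 \<le> snd z' \<and> snd z' < p" using R_bounds[OF S1_R[OF z']] .
  show "z = z'"
  proof (cases "snd z = 0"; cases "snd z' = 0")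
    assume a: "snd z = 0" "snd z' = 0"
    then show ?thesis using S1_y0[OF z] S1_y0[OF z'] fe p3 unfolding f_def by (auto simp: prod_eq_iff)
  next
    assume a: "snd z = 0" "snd z' \<noteq> 0"
    then have "f z' = tt z'" "tt z' \<noteq> 0" "tt z' < p" using tt_pos[OF z'] tt_ex[OF S1_R[OF z']] unfolding f_def by auto
    moreover have "f z = 0 \<or> f z = p" using a unfolding f_def by auto
    ultimately show ?thesis using fe by auto
  next
    assume a: "snd z \<noteq> 0" "snd z' = 0"
    then have "f z = tt z" "tt z \<noteq> 0" "tt z < p" using tt_pos[OF z] tt_ex[OF S1_R[OF z]] unfolding f_def by auto
    moreover have "f z' = 0 \<or> f z' = p" using a unfolding f_def by auto
    ultimately show ?thesis using fe by auto
  next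
    assume a: "snd z \<noteq> 0" "snd z' \<noteq> 0"
    then have t: "tt z = tt z'" using fe unfolding f_def by simp
    have k1: "p dvd ((tt z * tt z - D) * snd z - 2 * tt z)" using key_t[OF z a(1)] .
    have k2: "p dvd ((tt z * tt z - D) * snd z' - 2 * tt z)" using key_t[OF z' a(2)] t by simp
    have "p dvd (tt z * tt z - D) * (snd z - snd z')" using k1 k2 by algebra
    then have "p dvd (snd z - snd z')" using nsq_dvd[of "tt z"] p_prime by (simp add: prime_dvd_mult_iff)
    then have y: "snd z = snd z'" using cong_range_eq[of "snd z" "snd z'" p] bz bz' by (simp add: cong_iff_dvd_diff)
    have h1: "p dvd (tt z * snd z - (1 + fst z))" using tt_ex[OF S1_R[OF z] a(1)] by (simp add: cong_iff_dvd_diff)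
    have h2: "p dvd (tt z * snd z - (1 + fst z'))" using tt_ex[OF S1_R[OF z'] a(2)] t y by (simp add: cong_iff_dvd_diff)
    have "p dvd (fst z - fst z')" using h1 h2 by algebra
    then have "fst z = fst z'" using cong_range_eq[of "fst z" "fst z'" p] bz bz' by (simp add: cong_iff_dvd_diff)
    then show ?thesis using y by (simp add: prod_eq_iff)
  qed
qed

lemma card_S1: "card S1 \<le> nat (p + 1)"
proof -
  have "f ` S1 \<subseteq> {0..p}"
  proof
    fix w assume "w \<in> f ` S1"
    then obtain z where z: "z \<in> S1" "w = f z" by blast
    show "w \<in> {0..p}"
    proof (cases "snd z = 0")
      case True then show ?thesis using z p3 unfolding f_def by auto
    next
      case False then show ?thesis using z tt_ex[OF S1_R[OF z(1)] False] unfolding f_def by auto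
    qed
  qed
  then have "card S1 \<le> card {0..p}" using card_inj_on_le[OF f_inj] by blast
  then show ?thesis by simp
qed

lemma card_Sm: "card Sm \<le> card S1"
proof (cases "Sm = {}")
  case True then show ?thesis by simp
next
  case False
  then obtain z0 where z0: "z0 \<in> Sm" by blast
  define g where "g z = pmd p (pm D z z0)" for z
  have n0: "[nrm D z0 = -1] (mod p)" using z0 unfolding Sm_def by simp
  have "g ` Sm \<subseteq> S1"
  proof
    fix w assume "w \<in> g ` Sm"
    then obtain z where z: "z \<in> Sm" "w = g z" by blast
    have "[nrm D (pmd p (pm D z z0)) = nrm D (pm D z z0)] (mod p)" by (rule pc_nrm) (rule pc_pmd_self)
    moreover have "nrm D (pm D z z0) = nrm D z * nrm D z0" by (rule nrm_pm)
    moreover have "[nrm D z * nrm D z0 = (-1) * (-1)] (mod p)" using z(1) n0 unfolding Sm_def by (intro cong_mult) auto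
    ultimately have "[nrm D (pmd p (pm D z z0)) = (-1) * (-1)] (mod p)" using cong_trans by simp
    then have "[nrm D w = 1] (mod p)" unfolding z(2) g_def by simp
    moreover have "w \<in> R" unfolding z(2) g_def pmd_def R_def using p3 by (simp add: mem_Times_iff)
    ultimately show "w \<in> S1" unfolding S1_def by simp
  qed
  moreover have "inj_on g Sm"
  proof (rule inj_onI)
    fix z z' assume z: "z \<in> Sm" and z': "z' \<in> Sm" and e: "g z = g z'"
    have "pc p (pm D z z0) (pm D z' z0)" using e unfolding g_def by (simp add: pc_pmd)
    then have "pc p (pm D (pm D z z0) (cnj z0)) (pm D (pm D z' z0) (cnj z0))" by (rule pc_pm[OF _ pc_refl])
    moreover have "pm D (pm D w z0) (cnj z0) = (nrm D z0 * fst w, nrm D z0 * snd w)" for w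
      by (simp add: pm_def cnj_def nrm_def algebra_simps)
    ultimately have c: "[nrm D z0 * fst z = nrm D z0 * fst z'] (mod p)" "[nrm D z0 * snd z = nrm D z0 * snd z'] (mod p)"
      unfolding pc_def by auto
    have "[(-1) * fst z = (-1) * fst z'] (mod p)"
      using c(1) n0 by (meson cong_mult cong_refl cong_sym cong_trans)
    then have "[fst z = fst z'] (mod p)" by (simp add: cong_minus_minus_iff)
    moreover have "[(-1) * snd z = (-1) * snd z'] (mod p)"
      using c(2) n0 by (meson cong_mult cong_refl cong_sym cong_trans)
    then have "[snd z = snd z'] (mod p)" by (simp add: cong_minus_minus_iff)
    moreover have "z \<in> R" "z' \<in> R" using z z' unfolding Sm_def by auto
    ultimately have "fst z = fst z'" "snd z = snd z'" using R_bounds cong_range_eq by blast+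
    then show "z = z'" by (simp add: prod_eq_iff)
  qed
  moreover have "finite S1" using finite_subset[OF _ finR] S1_R by blast
  ultimately show ?thesis using card_inj_on_le by blast
qed

lemma card_S: "card (S1 \<union> Sm) \<le> 2 * nat (p + 1)"
  using card_Un_le[of S1 Sm] card_S1 card_Sm by linarith

end

lemma unit_d1:
  assumes "p \<ge> 3" "zp_unit p d"
  shows "\<not> p dvd d 1"
proof
  assume H: "p dvd d 1"
  obtain y where "zp_mul p d y = zp_of_int p 1" using assms(2) unfolding zp_unit_def by blast
  then have "(d 1 * y 1) mod p = 1 mod p" unfolding zp_mul_def zp_of_int_def by (metis power_one_right)
  moreover have "(d 1 * y 1) mod p = 0" using H by simp
  ultimately show False using assms(1) by simp
qed

lemma hensel_step:
  fixes p a c c' :: int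
  assumes p: "prime p" "p \<ge> 3" and n: "n \<ge> 1" and a: "[a*a = c] (mod p^n)" "\<not> p dvd a"
    and c: "[c' = c] (mod p^n)"
  shows "\<exists>b. [b = a] (mod p^n) \<and> [b*b = c'] (mod p^(Suc n))"
proof -
  obtain n' where nn: "n = Suc n'" using n by (cases n) auto
  define Q where "Q = p ^ n'"
  have P: "p ^ n = Q * p" "p ^ Suc n = Q * p * p" unfolding Q_def nn by simp_all
  have "[c' = a*a] (mod p^n)" using a(1) c by (meson cong_sym cong_trans)
  then obtain E where E: "c' = a*a + Q*p*E" unfolding P by (metis cong_iff_lin cong_sym)
  have "\<not> p dvd 2" using p zdvd_imp_le[of p 2] by auto
  then have "\<not> p dvd (2*a)" using a(2) p by (simp add: prime_dvd_mult_iff)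
  then have "coprime p (2*a)" by (rule prime_imp_coprime[OF p(1)])
  then have "coprime (2*a) p" by (simp add: coprime_commute)
  then obtain v where "[2*a*v = 1] (mod p)" using cong_solve_coprime_int by blast
  then obtain g where g: "1 = 2*a*v + p*g" unfolding cong_iff_lin by blast
  define b where "b = a + Q*p*E*v"
  have "[b = a] (mod p^n)" unfolding b_def P by (simp add: cong_iff_dvd_diff)
  moreover have "p^(Suc n) dvd (c' - b*b)" unfolding P b_def E using g by algebra
  then have "[b*b = c'] (mod p^(Suc n))" by (simp add: cong_iff_dvd_diff dvd_diff_commute)
  ultimately show ?thesis by blast
qed

definition GG :: "int \<Rightarrow> zp \<Rightarrow> nat \<Rightarrow> int \<Rightarrow> int \<Rightarrow> bool" where
  "GG p d n a b \<longleftrightarrow> 0 \<le> b \<and> b < p^(Suc n) \<and> b mod p^n = a \<and> [b*b = d (Suc n)] (mod p^(Suc n)) \<and> \<not> p dvd b"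

primrec hs :: "int \<Rightarrow> zp \<Rightarrow> nat \<Rightarrow> int" where
  "hs p d 0 = 0"
| "hs p d (Suc n) = (SOME b. GG p d n (hs p d n) b)"

lemma hensel:
  assumes p: "prime p" "p \<ge> 3" and dZ: "d \<in> Zp p" and u: "\<not> p dvd d 1" and r: "[r*r = d 1] (mod p)"
  shows "zp_square p d"
proof -
  have p0: "p > 0" using p by simp
  define Inv where "Inv n \<longleftrightarrow> 0 \<le> hs p d n \<and> hs p d n < p^n \<and> [hs p d n * hs p d n = d n] (mod p^n) \<and> (n \<ge> 1 \<longrightarrow> \<not> p dvd hs p d n)" for n
  have ex: "\<exists>b. GG p d n (hs p d n) b" if I: "Inv n" for n
  proof (cases "n = 0")
    case True
    have "\<not> p dvd r"
    proof
      assume "p dvd r"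
      then have "p dvd r*r" by simp
      then have "p dvd d 1" using r by (simp add: cong_dvd_iff)
      then show False using u by simp
    qed
    then have "\<not> p dvd r mod p" by (simp add: dvd_mod_iff)
    moreover have "[(r mod p)*(r mod p) = d 1] (mod p)" using r by (simp add: cong_def mod_simps)
    ultimately have "GG p d 0 0 (r mod p)" unfolding GG_def using p0 by simp
    then show ?thesis using True by auto
  next
    case False
    let ?a = "hs p d n"
    have "[d (Suc n) = d n] (mod p^n)" using Zp_cong[OF dZ] .
    then obtain b0 where b0: "[b0 = ?a] (mod p^n)" "[b0*b0 = d (Suc n)] (mod p^(Suc n))"
      using hensel_step[OF p _ _ _ ] I False unfolding Inv_def by (metis less_one not_le)
    define b where "b = b0 mod p^(Suc n)"
    have "0 \<le> b" "b < p^(Suc n)" unfolding b_def using p0 by simp_all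
    moreover have "b mod p^n = ?a"
    proof -
      have "b mod p^n = b0 mod p^n" unfolding b_def by (simp add: mod_mod_cancel le_imp_power_dvd)
      also have "\<dots> = ?a mod p^n" using b0(1) by (simp add: cong_def)
      also have "\<dots> = ?a" using I unfolding Inv_def by simp
      finally show ?thesis .
    qed
    moreover have "[b*b = d (Suc n)] (mod p^(Suc n))" unfolding b_def using b0(2) by (simp add: cong_def mod_simps)
    moreover have "\<not> p dvd b"
    proof
      assume "p dvd b"
      have "[b = b0] (mod p)" unfolding b_def
        by (metis cong_mod_left cong_refl cong_dvd_modulus dvd_power zero_less_Suc cong_sym)
      moreover have "[b0 = ?a] (mod p)" using b0(1) False by (metis cong_dvd_modulus dvd_power not_gr0)
      ultimately have "p dvd ?a" using \<open>p dvd b\<close> by (meson cong_dvd_iff cong_trans)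
      then show False using I False unfolding Inv_def by simp
    qed
    ultimately have "GG p d n ?a b" unfolding GG_def by simp
    then show ?thesis by blast
  qed
  have Iall: "Inv n" for n
  proof (induction n)
    case 0 then show ?case unfolding Inv_def by simp
  next
    case (Suc n)
    have "GG p d n (hs p d n) (hs p d (Suc n))" using someI_ex[OF ex[OF Suc.IH]] by simp
    then show ?case unfolding Inv_def GG_def by simp
  qed
  have yZ: "hs p d \<in> Zp p" unfolding Zp_def
  proof (intro CollectI allI conjI)
    fix n
    show "0 \<le> hs p d n" "hs p d n < p^n" using Iall[of n] unfolding Inv_def by auto
    have "GG p d n (hs p d n) (hs p d (Suc n))" using someI_ex[OF ex[OF Iall[of n]]] by simp
    then show "hs p d (Suc n) mod p ^ n = hs p d n" unfolding GG_def by simp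
  qed
  have "zp_mul p (hs p d) (hs p d) = d"
  proof
    fix n
    have "(hs p d n * hs p d n) mod p^n = d n mod p^n" using Iall[of n] unfolding Inv_def cong_def by simp
    then show "zp_mul p (hs p d) (hs p d) n = d n" unfolding zp_mul_def using Zp_rng[OF dZ] by simp
  qed
  then show ?thesis unfolding zp_square_def using yZ by blast
qed

lemma nonsq:
  assumes "prime p" "p \<ge> 3" "d \<in> Zp p" "zp_unit p d" "\<not> zp_square p d"
  shows "\<not> [x*x = d 1] (mod p)"
  using hensel[OF assms(1,2,3) unit_d1[OF assms(2,4)]] assms(5) by blast

context thm7_ctx
begin

lemma part3:
  assumes l: "l = mod_order p d lam" and k: "k = nu p (zpd_sub p (P l) (zpd_one p))"
    and lk: "int l = 2 * (p + 1)" "k = 1"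
    and nsq: "\<And>x. \<not> [x * x = d 1] (mod p)"
  shows "zpd_closure p {P n | n. True} = U0 p d"
proof -
  interpret C: cnt_ctx p "d 1" using p_prime p3 nsq by unfold_locales
  let ?S = "C.S1 \<union> C.Sm"
  have rpS: "rp 1 w \<in> ?S" if w: "w \<in> U0 p d" for w
  proof -
    have wZ: "w \<in> Zpd p" using w unfolding U0_def by auto
    have "rp 1 w = pmd p (rp 1 w)" using rp_Zpd[OF wZ, of 1] by simp
    moreover have "pmd p (rp 1 w) \<in> C.R" using p0 unfolding C.R_def pmd_def by (simp add: mem_Times_iff)
    ultimately have R: "rp 1 w \<in> C.R" by simp
    obtain e where e: "e = 1 \<or> e = -1" "\<And>M. [nrm (d M) (rp M w) = e] (mod p ^ M)"
      using w U0_iff[OF p0 dZ] by blast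
    have "[nrm (d 1) (rp 1 w) = e] (mod p)" using e(2)[of 1] by simp
    then show ?thesis using R e(1) unfolding C.S1_def C.Sm_def by auto
  qed
  have finS: "finite ?S" using C.finR unfolding C.S1_def C.Sm_def by (auto intro: finite_subset)
  let ?T = "(\<lambda>i. rp 1 (P i)) ` {..<l}"
  have TS: "?T \<subseteq> ?S" using rpS PU by blast
  have inj: "inj_on (\<lambda>i. rp 1 (P i)) {..<l}" using distinct_P[OF l] by (auto simp: inj_on_def)
  have "card ?T = l" using card_image[OF inj] by simp
  moreover have "card ?S \<le> 2 * nat (p + 1)" using C.card_S .
  moreover have "2 * nat (p + 1) = l"
  proof -
    have "int (2 * nat (p + 1)) = 2 * (p + 1)" using p0 by simp
    then have "int (2 * nat (p + 1)) = int l" using lk(1) by simp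
    then show ?thesis by (simp only: of_nat_eq_iff)
  qed
  ultimately have TeqS: "?T = ?S" using card_seteq[OF finS TS] by simp
  have "U0 p d \<subseteq> (\<Union>i<l. zpd_coset p (P i) k \<inter> U0 p d)"
  proof
    fix z assume z: "z \<in> U0 p d"
    have zZ: "z \<in> Zpd p" using z unfolding U0_def by auto
    have "rp 1 z \<in> ?T" using rpS[OF z] TeqS by simp
    then obtain i where i: "i < l" "rp 1 z = rp 1 (P i)" by auto
    have "rp j z = rp j (P i)" if "enat j \<le> k" for j
    proof -
      have "j \<le> 1" using that lk(2) by (simp add: one_enat_def)
      then show ?thesis using rp_eq_le[OF zZ PZ p0 _ i(2)] by blast
    qed
    then have "z \<in> zpd_coset p (P i) k" using coset_iff[OF PZ p0] zZ by blast
    then show "z \<in> (\<Union>i<l. zpd_coset p (P i) k \<inter> U0 p d)" using i z by blast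
  qed
  moreover have "(\<Union>i<l. zpd_coset p (P i) k \<inter> U0 p d) \<subseteq> U0 p d" by blast
  ultimately show ?thesis using part1[OF l k] by blast
qed

end

theorem theorem7:
  fixes p :: int and d :: zp and lam :: zpd and l :: nat and k :: enat
  assumes "prime p" and "p \<ge> 3"
    and "d \<in> Zp p" and "zp_unit p d" and "\<not> zp_square p d"
    and "lam \<in> U0 p d"
    and "l = mod_order p d lam"
    and "k = nu p (zpd_sub p (zpd_pow p d lam l) (zpd_one p))"
  shows "zpd_closure p {zpd_pow p d lam n | n. True}
           = (\<Union>i<l. zpd_coset p (zpd_pow p d lam i) k \<inter> U0 p d)
       \<and> (\<forall>i<l. \<forall>j<l. i \<noteq> j \<longrightarrow>
            (zpd_coset p (zpd_pow p d lam i) k \<inter> U0 p d)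
              \<inter> (zpd_coset p (zpd_pow p d lam j) k \<inter> U0 p d) = {})
       \<and> (int l = 2 * (p + 1) \<and> k = 1 \<longrightarrow>
            zpd_closure p {zpd_pow p d lam n | n. True} = U0 p d)"
proof -
  interpret thm7_ctx p d lam using assms(1,2,3,6) by unfold_locales
  have ns: "\<And>x. \<not> [x * x = d 1] (mod p)" using nonsq[OF assms(1,2,3,4,5)] .
  show ?thesis
    using part1[OF assms(7,8)] part2[OF assms(7,8)] part3[OF assms(7,8) _ _ ns] by blast
qed

end
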